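(* Let $n,N\ge 1$, $T>0$, $\mathbf c\in\mathbb R^n_+$, $\mathbf d\in\mathbb R^n_+$, $C\ge 0$ with $d_{i+1}-d_i\le c_{i+1}$ for all $i\in[n-1]$. Suppose the support set $\mathcal U\subseteq\mathbb R^n$ is nonempty, compact and convex, let $\widehat{\mathbf u}^1,\dots,\widehat{\mathbf u}^N\in\mathcal U$ and $\epsilon>0$. (i) If $p=1$, then problem W-DRAS has optimal value $$\widehat Z(N,\epsilon)=\inf\Big\{\epsilon\rho+\tfrac1N\sum_{j=1}^N\beta_j:\ \rho\in\mathbb R,\ \boldsymbol\beta\in\mathbb R^N,\ \mathbf s\in\mathcal S,\ \rho\ge 0,\ \beta_j\mathbf e_1\mathbf e_1^\top-\mathbf H^1_j(\rho,\mathbf s)\in\mathcal{COP}(\mathcal K_1^j)\ \forall j\in[N]\Big\},$$ where $\mathbf e_1$ is the first standard basis vector of $\mathbb R^{3n+1}$, and W-DRAS and this program have the same set of optimal solutions $\mathbf s$. (ii) If $p=2$, then $$\widehat Z(N,\epsilon)=\inf\Big\{\epsilon^2\rho+\tfrac1N\sum_{j=1}^N\beta_j:\ \rho\in\mathbb R,\ \boldsymbol\beta\in\mathbb R^N,\ \mathbf s\in\mathcal S,\ \rho\ge 0,\ \beta_j\mathbf e_1\mathbf e_1^\top-\mathbf H^2_j(\rho,\mathbf s)\in\mathcal{COP}(\mathcal K_2)\ \forall j\in[N]\Big\},$$ where $\mathbf e_1$ is the first standard basis vector of $\mathbb R^{2n+1}$, and W-DRAS and this program have the same set of optimal solutions $\mathbf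 s$.
   Context: Notation: $[m]=\{1,\dots,m\}$, $[i,j]_{\mathbb Z}=\{i,\dots,j\}$; $\mathbf e$ is the all-ones vector and $\mathbf I$ the identity in the appropriate dimension; $\mathbb S^k$ denotes symmetric $k\times k$ matrices. The feasible schedules are $\mathcal S=\{\mathbf s\in\mathbb R^n:\mathbf s\ge 0,\ \sum_i s_i\le T\}$. For $\mathbf s\in\mathcal S$ and $\mathbf u\in\mathbb R^n$, $f(\mathbf s,\mathbf u)$ is the optimal value of the linear program $\min_{\mathbf w\in\mathbb R^{n+1},\mathbf v\in\mathbb R^n}\sum_{i=1}^n(c_iw_i+d_iv_i)+Cw_{n+1}$ s.t. $w_i-v_{i-1}=u_{i-1}+w_{i-1}-s_{i-1}$ for $i\in[2,n+1]_{\mathbb Z}$, $\mathbf w\ge0$, $w_1=0$, $\mathbf v\ge0$. For $p\ge1$ and distributions $\mathbb Q_1,\mathbb Q_2$ on $\mathcal U$, the Wasserstein distance is $d_p(\mathbb Q_1,\mathbb Q_2)=\big(\inf_{\Pi}\mathbb E_\Pi[\|\mathbf u_1-\mathbf u_2\|_p^p]\big)^{1/p}$, infimum over joint distributions $\Pi$ of $(\mathbf u_1,\mathbf u_2)$ with marginals $\mathbb Q_1,\mathbb Q_2$. With $\widehat{\mathbb P}^N=\frac1N\sum_{j}\delta_{\widehat{\mathbf u}^j}$, the ambiguity set is $\mathcal D_p(\widehat{\mathbb P}^N,\epsilon)=\{\mathbb Q$ probability distribution on $\mathcal U: d_p(\mathbb Q,\widehat{\mathbb P}^N)\le\epsilon\}$,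 and W-DRAS is the problem $\widehat Z(N,\epsilon)=\min_{\mathbf s\in\mathcal S}\sup_{\mathbb Q\in\mathcal D_p(\widehat{\mathbb P}^N,\epsilon)}\mathbb E_{\mathbb Q}[f(\mathbf s,\mathbf u)]$. Let $\mathcal Y=\{\mathbf y\in\mathbb R^n: -y_i\le d_i\ \forall i\in[n];\ y_{i-1}-y_i\le c_i\ \forall i\in[2,n]_{\mathbb Z};\ y_n\le C\}$. Define $\mathcal F_1^j=\{(\mathbf u^+,\mathbf u^-,\mathbf y)\in\mathbb R^n_+\times\mathbb R^n_+\times\mathbb R^n:\mathbf u^+-\mathbf u^-+\widehat{\mathbf u}^j\in\mathcal U,\ \mathbf y\in\mathcal Y\}$ and $\mathcal F_2=\{(\mathbf u,\mathbf y)\in\mathbb R^n\times\mathbb R^n:\mathbf u\in\mathcal U,\mathbf y\in\mathcal Y\}$, and their perspective cones $\mathcal K_1^j=\mathrm{closure}\{(t,\mathbf u^+,\mathbf u^-,\mathbf y):(\mathbf u^+/t,\mathbf u^-/t,\mathbf y/t)\in\mathcal F_1^j,\ t>0\}\subseteq\mathbb R^{3n+1}$ and $\mathcal K_2=\mathrm{closure}\{(t,\mathbf u,\mathbf y):(\mathbf u/t,\mathbf y/t)\in\mathcal F_2,\ t>0\}\subseteq\mathbb R^{2n+1}$. For a closed convex cone $\mathcal K\subseteq\mathbb R^k$, $\mathcal{COP}(\mathcal K)=\{\mathbf M\in\mathbb S^k:\mathbf x^\top\mathbf M\mathbf x\ge0\ \forall\mathbf x\in\mathcal K\}$. For $\rho\in\mathbb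 R$, $\mathbf s\in\mathbb R^n$, define the block matrices (block sizes $1,n,n,n$ resp. $1,n,n$) $$\mathbf H^1_j(\rho,\mathbf s)=\begin{bmatrix}0&-\tfrac12\rho\mathbf e^\top&-\tfrac12\rho\mathbf e^\top&\tfrac12(\widehat{\mathbf u}^j-\mathbf s)^\top\\-\tfrac12\rho\mathbf e&0&0&\tfrac12\mathbf I\\-\tfrac12\rho\mathbf e&0&0&-\tfrac12\mathbf I\\\tfrac12(\widehat{\mathbf u}^j-\mathbf s)&\tfrac12\mathbf I&-\tfrac12\mathbf I&0\end{bmatrix},\quad \mathbf H^2_j(\rho,\mathbf s)=\begin{bmatrix}-\rho\|\widehat{\mathbf u}^j\|_2^2&\rho(\widehat{\mathbf u}^j)^\top&-\tfrac12\mathbf s^\top\\\rho\widehat{\mathbf u}^j&-\rho\mathbf I&\tfrac12\mathbf I\\-\tfrac12\mathbf s&\tfrac12\mathbf I&0\end{bmatrix}.$$ *)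

theory Defs
  imports "HOL-Analysis.Analysis" "HOL-Probability.Probability"
begin

text \<open>A vector of R^n is a function nat => real whose entries 1..n are the
coordinates and which vanishes at every other index (zero padding).  A vector of R^k used
as argument of a k x k matrix is a function nat => real with entries 0..k-1 (zero elsewhere);
a k x k matrix is a function nat => nat => real with entries indexed by 0..k-1.
Topology on nat => real is the product topology (which on zero-padded vectors is the
Euclidean topology of R^n); measures on R^n are Borel measures on nat => real.\<close>

definition vecs :: "nat \<Rightarrow> (nat \<Rightarrow> real) set" where
  "vecs n = {x. \<forall>i. (i = 0 \<or> n < i) \<longrightarrow> x i = 0}"

definition vecs0 :: "nat \<Rightarrow> (nat \<Rightarrow> real) set" where
  "vecs0 k = {x. \<forall>i. k \<le> i \<longrightarrow> x i = 0}"

definition convex_vecs :: "nat \<Rightarrow> (nat \<Rightarrow> real) set \<Rightarrow> bool" where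
  "convex_vecs n U \<longleftrightarrow> (\<forall>x\<in>U. \<forall>y\<in>U. \<forall>l::real. 0 \<le> l \<and> l \<le> 1 \<longrightarrow>
      (\<lambda>i. l * x i + (1 - l) * y i) \<in> U)"

definition sched :: "nat \<Rightarrow> real \<Rightarrow> (nat \<Rightarrow> real) set" where
  "sched n T = {s \<in> vecs n. (\<forall>i\<in>{1..n}. 0 \<le> s i) \<and> (\<Sum>i=1..n. s i) \<le> T}"

definition lp_feasible :: "nat \<Rightarrow> (nat \<Rightarrow> real) \<Rightarrow> (nat \<Rightarrow> real) \<Rightarrow> (nat \<Rightarrow> real) \<Rightarrow> (nat \<Rightarrow> real) \<Rightarrow> bool" where
  "lp_feasible n s u w v \<longleftrightarrow>
     (\<forall>i\<in>{2..n+1}. w i - v (i-1) = u (i-1) + w (i-1) - s (i-1)) \<and>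
     (\<forall>i\<in>{1..n+1}. 0 \<le> w i) \<and> w 1 = 0 \<and> (\<forall>i\<in>{1..n}. 0 \<le> v i)"

definition recourse :: "nat \<Rightarrow> (nat \<Rightarrow> real) \<Rightarrow> (nat \<Rightarrow> real) \<Rightarrow> real \<Rightarrow> (nat \<Rightarrow> real) \<Rightarrow> (nat \<Rightarrow> real) \<Rightarrow> real" where
  "recourse n c d C s u = Inf {(\<Sum>i=1..n. c i * w i + d i * v i) + C * w (n+1) | w v. lp_feasible n s u w v}"

definition distr_on :: "(nat \<Rightarrow> real) set \<Rightarrow> (nat \<Rightarrow> real) measure \<Rightarrow> bool" where
  "distr_on U Q \<longleftrightarrow> prob_space Q \<and> sets Q = sets borel \<and> emeasure Q U = 1"

definition couplings :: "(nat \<Rightarrow> real) measure \<Rightarrow> (nat \<Rightarrow> real) measure \<Rightarrow> ((nat \<Rightarrow> real) \<times> (nat \<Rightarrow> real)) measure set" where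
  "couplings Q1 Q2 = {P. prob_space P \<and> sets P = sets (borel \<Otimes>\<^sub>M borel) \<and>
       distr P borel fst = Q1 \<and> distr P borel snd = Q2}"

definition pnorm_pow :: "real \<Rightarrow> nat \<Rightarrow> (nat \<Rightarrow> real) \<Rightarrow> (nat \<Rightarrow> real) \<Rightarrow> real" where
  "pnorm_pow p n x y = (\<Sum>i=1..n. \<bar>x i - y i\<bar> powr p)"

definition wdist :: "real \<Rightarrow> nat \<Rightarrow> (nat \<Rightarrow> real) measure \<Rightarrow> (nat \<Rightarrow> real) measure \<Rightarrow> real" where
  "wdist p n Q1 Q2 = (INF P \<in> couplings Q1 Q2. (\<integral>z. pnorm_pow p n (fst z) (snd z) \<partial>P)) powr (1/p)"

definition empirical :: "nat \<Rightarrow> (nat \<Rightarrow> nat \<Rightarrow> real) \<Rightarrow> (nat \<Rightarrow> real) measure" where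
  "empirical N uh = distr (measure_pmf (map_pmf uh (pmf_of_set {1..N}))) borel (\<lambda>x. x)"

definition ambiguity :: "real \<Rightarrow> nat \<Rightarrow> (nat \<Rightarrow> real) set \<Rightarrow> nat \<Rightarrow> (nat \<Rightarrow> nat \<Rightarrow> real) \<Rightarrow> real \<Rightarrow> (nat \<Rightarrow> real) measure set" where
  "ambiguity p n U N uh eps = {Q. distr_on U Q \<and> wdist p n Q (empirical N uh) \<le> eps}"

definition wdras_obj :: "real \<Rightarrow> nat \<Rightarrow> (nat \<Rightarrow> real) \<Rightarrow> (nat \<Rightarrow> real) \<Rightarrow> real \<Rightarrow> (nat \<Rightarrow> real) set \<Rightarrow> nat \<Rightarrow> (nat \<Rightarrow> nat \<Rightarrow> real) \<Rightarrow> real \<Rightarrow> (nat \<Rightarrow> real) \<Rightarrow> ereal" where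
  "wdras_obj p n c d C U N uh eps s =
     (SUP Q \<in> ambiguity p n U N uh eps. ereal (\<integral>u. recourse n c d C s u \<partial>Q))"

definition wdras_val :: "real \<Rightarrow> nat \<Rightarrow> real \<Rightarrow> (nat \<Rightarrow> real) \<Rightarrow> (nat \<Rightarrow> real) \<Rightarrow> real \<Rightarrow> (nat \<Rightarrow> real) set \<Rightarrow> nat \<Rightarrow> (nat \<Rightarrow> nat \<Rightarrow> real) \<Rightarrow> real \<Rightarrow> ereal" where
  "wdras_val p n T c d C U N uh eps = (INF s \<in> sched n T. wdras_obj p n c d C U N uh eps s)"

definition wdras_opt :: "real \<Rightarrow> nat \<Rightarrow> real \<Rightarrow> (nat \<Rightarrow> real) \<Rightarrow> (nat \<Rightarrow> real) \<Rightarrow> real \<Rightarrow> (nat \<Rightarrow> real) set \<Rightarrow> nat \<Rightarrow> (nat \<Rightarrow> nat \<Rightarrow> real) \<Rightarrow> real \<Rightarrow> (nat \<Rightarrow> real) set" where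
  "wdras_opt p n T c d C U N uh eps =
     {s \<in> sched n T. wdras_obj p n c d C U N uh eps s = wdras_val p n T c d C U N uh eps}"

definition Yset :: "nat \<Rightarrow> (nat \<Rightarrow> real) \<Rightarrow> (nat \<Rightarrow> real) \<Rightarrow> real \<Rightarrow> (nat \<Rightarrow> real) set" where
  "Yset n c d C = {y \<in> vecs n. (\<forall>i\<in>{1..n}. - y i \<le> d i) \<and> (\<forall>i\<in>{2..n}. y (i-1) - y i \<le> c i) \<and> y n \<le> C}"

text \<open>Block b (b = 0,1,2,...) of a stacked vector x = (x 0, block 0, block 1, ...), as a vector of R^n.\<close>
definition blk :: "nat \<Rightarrow> (nat \<Rightarrow> real) \<Rightarrow> nat \<Rightarrow> nat \<Rightarrow> real" where
  "blk n x b = (\<lambda>i. if 1 \<le> i \<and> i \<le> n then x (b * n + i) else 0)"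

definition F1 :: "nat \<Rightarrow> (nat \<Rightarrow> real) \<Rightarrow> (nat \<Rightarrow> real) \<Rightarrow> real \<Rightarrow> (nat \<Rightarrow> real) set \<Rightarrow> (nat \<Rightarrow> real)
     \<Rightarrow> ((nat \<Rightarrow> real) \<times> (nat \<Rightarrow> real) \<times> (nat \<Rightarrow> real)) set" where
  "F1 n c d C U uhj = {(up, um, y). up \<in> vecs n \<and> um \<in> vecs n \<and>
      (\<forall>i\<in>{1..n}. 0 \<le> up i \<and> 0 \<le> um i) \<and> (\<lambda>i. up i - um i + uhj i) \<in> U \<and> y \<in> Yset n c d C}"

definition F2 :: "nat \<Rightarrow> (nat \<Rightarrow> real) \<Rightarrow> (nat \<Rightarrow> real) \<Rightarrow> real \<Rightarrow> (nat \<Rightarrow> real) set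
     \<Rightarrow> ((nat \<Rightarrow> real) \<times> (nat \<Rightarrow> real)) set" where
  "F2 n c d C U = {(u, y). u \<in> U \<and> y \<in> Yset n c d C}"

text \<open>Perspective cones K_1^j in R^{3n+1} and K_2 in R^{2n+1} (coordinate 0 is t).\<close>
definition K1 :: "nat \<Rightarrow> (nat \<Rightarrow> real) \<Rightarrow> (nat \<Rightarrow> real) \<Rightarrow> real \<Rightarrow> (nat \<Rightarrow> real) set \<Rightarrow> (nat \<Rightarrow> real) \<Rightarrow> (nat \<Rightarrow> real) set" where
  "K1 n c d C U uhj = closure {x \<in> vecs0 (3*n+1). 0 < x 0 \<and>
      ((\<lambda>i. blk n x 0 i / x 0), (\<lambda>i. blk n x 1 i / x 0), (\<lambda>i. blk n x 2 i / x 0)) \<in> F1 n c d C U uhj}"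

definition K2 :: "nat \<Rightarrow> (nat \<Rightarrow> real) \<Rightarrow> (nat \<Rightarrow> real) \<Rightarrow> real \<Rightarrow> (nat \<Rightarrow> real) set \<Rightarrow> (nat \<Rightarrow> real) set" where
  "K2 n c d C U = closure {x \<in> vecs0 (2*n+1). 0 < x 0 \<and>
      ((\<lambda>i. blk n x 0 i / x 0), (\<lambda>i. blk n x 1 i / x 0)) \<in> F2 n c d C U}"

definition COP :: "nat \<Rightarrow> (nat \<Rightarrow> real) set \<Rightarrow> (nat \<Rightarrow> nat \<Rightarrow> real) set" where
  "COP k K = {M. (\<forall>i<k. \<forall>j<k. M i j = M j i) \<and>
      (\<forall>x\<in>K. 0 \<le> (\<Sum>i<k. \<Sum>j<k. x i * M i j * x j))}"

text \<open>Block number (0 for the leading scalar, 1,2,3 for the n-blocks) and position within the block.\<close>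
definition bnum :: "nat \<Rightarrow> nat \<Rightarrow> nat" where
  "bnum n i = (if i = 0 then 0 else (i - 1) div n + 1)"

definition bpos :: "nat \<Rightarrow> nat \<Rightarrow> nat" where
  "bpos n i = (i - 1) mod n + 1"

definition H1 :: "nat \<Rightarrow> (nat \<Rightarrow> real) \<Rightarrow> real \<Rightarrow> (nat \<Rightarrow> real) \<Rightarrow> nat \<Rightarrow> nat \<Rightarrow> real" where
  "H1 n uhj \<rho> s i j =
    (let a = bnum n i; b = bnum n j; p = bpos n i; q = bpos n j in
     if a = 0 \<and> b = 0 then 0
     else if a = 0 \<and> (b = 1 \<or> b = 2) then - \<rho> / 2
     else if (a = 1 \<or> a = 2) \<and> b = 0 then - \<rho> / 2
     else if a = 0 \<and> b = 3 then (uhj q - s q) / 2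
     else if a = 3 \<and> b = 0 then (uhj p - s p) / 2
     else if (a = 1 \<and> b = 3) \<or> (a = 3 \<and> b = 1) then (if p = q then 1/2 else 0)
     else if (a = 2 \<and> b = 3) \<or> (a = 3 \<and> b = 2) then (if p = q then - 1/2 else 0)
     else 0)"

definition H2 :: "nat \<Rightarrow> (nat \<Rightarrow> real) \<Rightarrow> real \<Rightarrow> (nat \<Rightarrow> real) \<Rightarrow> nat \<Rightarrow> nat \<Rightarrow> real" where
  "H2 n uhj \<rho> s i j =
    (let a = bnum n i; b = bnum n j; p = bpos n i; q = bpos n j in
     if a = 0 \<and> b = 0 then - \<rho> * (\<Sum>k=1..n. (uhj k)\<^sup>2)
     else if a = 0 \<and> b = 1 then \<rho> * uhj q
     else if a = 1 \<and> b = 0 then \<rho> * uhj p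
     else if a = 0 \<and> b = 2 then - s q / 2
     else if a = 2 \<and> b = 0 then - s p / 2
     else if a = 1 \<and> b = 1 then (if p = q then - \<rho> else 0)
     else if (a = 1 \<and> b = 2) \<or> (a = 2 \<and> b = 1) then (if p = q then 1/2 else 0)
     else 0)"

definition shiftM :: "real \<Rightarrow> (nat \<Rightarrow> nat \<Rightarrow> real) \<Rightarrow> nat \<Rightarrow> nat \<Rightarrow> real" where
  "shiftM \<beta> H = (\<lambda>i j. (if i = 0 \<and> j = 0 then \<beta> else 0) - H i j)"

definition prog1_feas :: "nat \<Rightarrow> real \<Rightarrow> (nat \<Rightarrow> real) \<Rightarrow> (nat \<Rightarrow> real) \<Rightarrow> real \<Rightarrow> (nat \<Rightarrow> real) set \<Rightarrow> nat \<Rightarrow> (nat \<Rightarrow> nat \<Rightarrow> real)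
     \<Rightarrow> real \<Rightarrow> (nat \<Rightarrow> real) \<Rightarrow> (nat \<Rightarrow> real) \<Rightarrow> bool" where
  "prog1_feas n T c d C U N uh \<rho> \<beta> s \<longleftrightarrow> s \<in> sched n T \<and> 0 \<le> \<rho> \<and>
     (\<forall>j\<in>{1..N}. shiftM (\<beta> j) (H1 n (uh j) \<rho> s) \<in> COP (3*n+1) (K1 n c d C U (uh j)))"

definition prog1_obj :: "nat \<Rightarrow> real \<Rightarrow> real \<Rightarrow> (nat \<Rightarrow> real) \<Rightarrow> real" where
  "prog1_obj N eps \<rho> \<beta> = eps * \<rho> + (1 / real N) * (\<Sum>j=1..N. \<beta> j)"

definition prog1_val where
  "prog1_val n T c d C U N uh eps =
     Inf {ereal (prog1_obj N eps \<rho> \<beta>) | \<rho> \<beta> s. prog1_feas n T c d C U N uh \<rho> \<beta> s}"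

definition prog1_opt where
  "prog1_opt n T c d C U N uh eps = {s. \<exists>\<rho> \<beta>. prog1_feas n T c d C U N uh \<rho> \<beta> s \<and>
       ereal (prog1_obj N eps \<rho> \<beta>) = prog1_val n T c d C U N uh eps}"

definition prog2_feas :: "nat \<Rightarrow> real \<Rightarrow> (nat \<Rightarrow> real) \<Rightarrow> (nat \<Rightarrow> real) \<Rightarrow> real \<Rightarrow> (nat \<Rightarrow> real) set \<Rightarrow> nat \<Rightarrow> (nat \<Rightarrow> nat \<Rightarrow> real)
     \<Rightarrow> real \<Rightarrow> (nat \<Rightarrow> real) \<Rightarrow> (nat \<Rightarrow> real) \<Rightarrow> bool" where
  "prog2_feas n T c d C U N uh \<rho> \<beta> s \<longleftrightarrow> s \<in> sched n T \<and> 0 \<le> \<rho> \<and>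
     (\<forall>j\<in>{1..N}. shiftM (\<beta> j) (H2 n (uh j) \<rho> s) \<in> COP (2*n+1) (K2 n c d C U))"

definition prog2_obj :: "nat \<Rightarrow> real \<Rightarrow> real \<Rightarrow> (nat \<Rightarrow> real) \<Rightarrow> real" where
  "prog2_obj N eps \<rho> \<beta> = eps\<^sup>2 * \<rho> + (1 / real N) * (\<Sum>j=1..N. \<beta> j)"

definition prog2_val where
  "prog2_val n T c d C U N uh eps =
     Inf {ereal (prog2_obj N eps \<rho> \<beta>) | \<rho> \<beta> s. prog2_feas n T c d C U N uh \<rho> \<beta> s}"

definition prog2_opt where
  "prog2_opt n T c d C U N uh eps = {s. \<exists>\<rho> \<beta>. prog2_feas n T c d C U N uh \<rho> \<beta> s \<and>
       ereal (prog2_obj N eps \<rho> \<beta>) = prog2_val n T c d C U N uh eps}"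

end

theory Submission
  imports Defs
begin


fun Wg :: "(nat \<Rightarrow> real) \<Rightarrow> (nat \<Rightarrow> real) \<Rightarrow> nat \<Rightarrow> real" where
  "Wg s u 0 = 0"
| "Wg s u (Suc k) = (if k = 0 then 0 else max 0 (Wg s u k + u k - s k))"

definition Vg :: "(nat \<Rightarrow> real) \<Rightarrow> (nat \<Rightarrow> real) \<Rightarrow> nat \<Rightarrow> real" where
  "Vg s u k = max 0 (- (Wg s u k + u k - s k))"

definition fcost :: "nat \<Rightarrow> (nat \<Rightarrow> real) \<Rightarrow> (nat \<Rightarrow> real) \<Rightarrow> real \<Rightarrow> (nat \<Rightarrow> real) \<Rightarrow> (nat \<Rightarrow> real) \<Rightarrow> real" where
  "fcost n c d C s u = (\<Sum>i=1..n. c i * Wg s u i + d i * Vg s u i) + C * Wg s u (n+1)"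

fun Zd :: "nat \<Rightarrow> (nat \<Rightarrow> real) \<Rightarrow> (nat \<Rightarrow> real) \<Rightarrow> real \<Rightarrow> (nat \<Rightarrow> real) \<Rightarrow> (nat \<Rightarrow> real) \<Rightarrow> nat \<Rightarrow> real" where
  "Zd n c d C s u 0 = (if Wg s u (n+1) > 0 then C else - d n)"
| "Zd n c d C s u (Suc m) = (if Wg s u (n-m) > 0 then Zd n c d C s u m + c (n-m) else - d (n - m - 1))"

definition yd :: "nat \<Rightarrow> (nat \<Rightarrow> real) \<Rightarrow> (nat \<Rightarrow> real) \<Rightarrow> real \<Rightarrow> (nat \<Rightarrow> real) \<Rightarrow> (nat \<Rightarrow> real) \<Rightarrow> nat \<Rightarrow> real" where
  "yd n c d C s u k = (if 1 \<le> k \<and> k \<le> n then Zd n c d C s u (n - k) else 0)"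

lemma Wg_nonneg: "0 \<le> Wg s u k"
  by (cases k) auto

lemma Wg_1[simp]: "Wg s u (Suc 0) = 0" by simp

lemma Wg_step: "1 \<le> k \<Longrightarrow> Wg s u (k+1) = max 0 (Wg s u k + u k - s k)"
  by simp

lemma Wg_V: "1 \<le> k \<Longrightarrow> Wg s u (k+1) - Vg s u k = u k + Wg s u k - s k"
  by (simp add: Vg_def)

lemma Vg_nonneg: "0 \<le> Vg s u k" by (simp add: Vg_def)

lemma greedy_feasible: "lp_feasible n s u (Wg s u) (Vg s u)"
  unfolding lp_feasible_def
proof (intro conjI ballI)
  fix i assume "i \<in> {2..n+1}"
  define k where "k = i - 1"
  have k: "i = k + 1" "1 \<le> k" using \<open>i \<in> {2..n+1}\<close> unfolding k_def by auto
  show "Wg s u i - Vg s u (i - 1) = u (i - 1) + Wg s u (i - 1) - s (i - 1)"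
    using Wg_V[OF k(2)] k by simp
qed (auto simp: Wg_nonneg Vg_nonneg)

lemma sum_by_parts:
  fixes y a :: "nat \<Rightarrow> real"
  assumes "1 \<le> m"
  shows "(\<Sum>k=1..m. y k * (a (k+1) - a k)) = y m * a (m+1) - y 1 * a 1 - (\<Sum>k=2..m. (y k - y (k-1)) * a k)"
  using assms
proof (induction m rule: dec_induct)
  case base then show ?case by (simp add: algebra_simps)
next
  case (step m)
  have "(\<Sum>k=1..Suc m. y k * (a (k+1) - a k)) = (\<Sum>k=1..m. y k * (a (k+1) - a k)) + y (m+1) * (a (m+2) - a (m+1))"
    by simp
  moreover have "(\<Sum>k=2..Suc m. (y k - y (k-1)) * a k) = (\<Sum>k=2..m. (y k - y (k-1)) * a k) + (y (m+1) - y m) * a (m+1)"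
    using step(1) by simp
  ultimately show ?case using step by (simp add: algebra_simps)
qed

lemma weak_duality_lp:
  assumes n: "1 \<le> n" and c: "\<forall>i\<in>{1..n}. 0 \<le> c i" and dd: "\<forall>i\<in>{1..n}. 0 \<le> d i"
    and feas: "lp_feasible n s u w v" and y: "y \<in> Yset n c d C"
  shows "(\<Sum>k=1..n. (u k - s k) * y k) \<le> (\<Sum>i=1..n. c i * w i + d i * v i) + C * w (n+1)"
proof -
  have eq: "u k - s k = w (k+1) - w k - v k" if "k \<in> {1..n}" for k
  proof -
    have h: "\<forall>i\<in>{2..n+1}. w i - v (i-1) = u (i-1) + w (i-1) - s (i-1)"
      using feas unfolding lp_feasible_def by blast
    have "k+1 \<in> {2..n+1}" using that by auto
    from bspec[OF h this] show ?thesis by simp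
  qed
  have "(\<Sum>k=1..n. (u k - s k) * y k) = (\<Sum>k=1..n. y k * (w (k+1) - w k)) - (\<Sum>k=1..n. y k * v k)"
  proof -
    have "(\<Sum>k=1..n. (u k - s k) * y k) = (\<Sum>k=1..n. y k * (w (k+1) - w k) - y k * v k)"
      by (rule sum.cong) (auto simp: eq algebra_simps)
    thus ?thesis by (simp add: sum_subtractf)
  qed
  also have "\<dots> = y n * w (n+1) - y 1 * w 1 - (\<Sum>k=2..n. (y k - y (k-1)) * w k) - (\<Sum>k=1..n. y k * v k)"
    using sum_by_parts[OF n] by simp
  also have "\<dots> \<le> C * w (n+1) + (\<Sum>k=2..n. c k * w k) + (\<Sum>k=1..n. d k * v k)"
  proof -
    have w1: "w 1 = 0" and wn: "0 \<le> w (n+1)" using feas n unfolding lp_feasible_def by auto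
    have "y n \<le> C" using y unfolding Yset_def by auto
    hence a: "y n * w (n+1) \<le> C * w (n+1)" using wn by (simp add: mult_right_mono)
    have b: "- (\<Sum>k=2..n. (y k - y (k-1)) * w k) \<le> (\<Sum>k=2..n. c k * w k)"
    proof -
      have "(\<Sum>k=2..n. - ((y k - y (k-1)) * w k)) \<le> (\<Sum>k=2..n. c k * w k)"
      proof (rule sum_mono)
        fix k assume k: "k \<in> {2..n}"
        have "y (k-1) - y k \<le> c k" using y k unfolding Yset_def by auto
        moreover have "0 \<le> w k" using feas k unfolding lp_feasible_def by auto
        ultimately show "- ((y k - y (k-1)) * w k) \<le> c k * w k"
          by (metis minus_diff_eq mult_minus_left mult_right_mono)
      qed
      thus ?thesis by (simp add: sum_negf)
    qed
    have e: "- (\<Sum>k=1..n. y k * v k) \<le> (\<Sum>k=1..n. d k * v k)"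
    proof -
      have "(\<Sum>k=1..n. - (y k * v k)) \<le> (\<Sum>k=1..n. d k * v k)"
      proof (rule sum_mono)
        fix k assume k: "k \<in> {1..n}"
        have "- y k \<le> d k" using y k unfolding Yset_def by auto
        moreover have "0 \<le> v k" using feas k unfolding lp_feasible_def by auto
        ultimately show "- (y k * v k) \<le> d k * v k"
          by (metis mult_minus_left mult_right_mono)
      qed
      thus ?thesis by (simp add: sum_negf)
    qed
    show ?thesis using a b e w1 by simp
  qed
  also have "\<dots> \<le> (\<Sum>i=1..n. c i * w i + d i * v i) + C * w (n+1)"
  proof -
    have w1: "w 1 = 0" using feas unfolding lp_feasible_def by auto
    have "(\<Sum>i=1..n. c i * w i) = c 1 * w 1 + (\<Sum>k=2..n. c k * w k)"
      using n by (simp add: sum.atLeast_Suc_atMost numeral_2_eq_2)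
    thus ?thesis using w1 by (simp add: sum.distrib)
  qed
  finally show ?thesis .
qed

lemma WV_excl: "1 \<le> k \<Longrightarrow> 0 < Vg s u k \<Longrightarrow> Wg s u (k+1) = 0"
  by (simp add: Vg_def)

lemma Zd_lower:
  assumes c: "\<forall>i\<in>{1..n}. 0 \<le> c i" and C: "0 \<le> C" and dd: "\<forall>i\<in>{1..n}. 0 \<le> d i"
    and h: "\<forall>i\<in>{1..n-1}. d (i+1) - d i \<le> c (i+1)"
  shows "m < n \<Longrightarrow> - d (n-m) \<le> Zd n c d C s u m"
proof (induction m)
  case 0
  have "0 \<le> d n" using dd 0 by auto
  then show ?case using C by auto
next
  case (Suc m)
  have IH: "- d (n-m) \<le> Zd n c d C s u m" using Suc by auto
  have hi: "d (n-m) - d (n-m-1) \<le> c (n-m)"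
    using h Suc(2) by (auto dest!: bspec[where x="n-m-1"] simp: Suc_diff_Suc)
  show ?case using IH hi by (auto simp: Suc_diff_Suc[symmetric])
qed

lemma yd_in_Y:
  assumes n: "1 \<le> n" and c: "\<forall>i\<in>{1..n}. 0 \<le> c i" and C: "0 \<le> C" and dd: "\<forall>i\<in>{1..n}. 0 \<le> d i"
    and h: "\<forall>i\<in>{1..n-1}. d (i+1) - d i \<le> c (i+1)"
  shows "yd n c d C s u \<in> Yset n c d C"
  unfolding Yset_def
proof (intro CollectI conjI ballI)
  show "yd n c d C s u \<in> vecs n" unfolding vecs_def yd_def by auto
next
  fix i assume i: "i \<in> {1..n}"
  have "- d (n - (n-i)) \<le> Zd n c d C s u (n-i)"
    by (rule Zd_lower[OF c C dd h]) (use i in auto)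
  then show "- yd n c d C s u i \<le> d i" using i by (simp add: yd_def)
next
  fix i assume i: "i \<in> {2..n}"
  define m where "m = n - i"
  have im: "n - m = i" "i - 1 = n - m - 1" "n - (i - 1) = Suc m" using i unfolding m_def by auto
  have low: "- d i \<le> Zd n c d C s u m"
    using Zd_lower[OF c C dd h, of m s u] im i by (auto simp: m_def)
  have hi: "d i - d (i-1) \<le> c i"
    using h i by (auto dest!: bspec[where x="i-1"])
  have ci: "0 \<le> c i" using c i by auto
  have "yd n c d C s u (i-1) = Zd n c d C s u (Suc m)" "yd n c d C s u i = Zd n c d C s u m"
    using i im by (auto simp: yd_def m_def)
  then show "yd n c d C s u (i - 1) - yd n c d C s u i \<le> c i"
    using low hi im by auto
next
  have "0 \<le> d n" using dd n by auto
  then show "yd n c d C s u n \<le> C" using n C by (auto simp: yd_def)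
qed

lemma yd_value:
  assumes n: "1 \<le> n"
  shows "(\<Sum>k=1..n. (u k - s k) * yd n c d C s u k) = fcost n c d C s u"
proof -
  let ?y = "yd n c d C s u" and ?W = "Wg s u" and ?V = "Vg s u"
  have eq: "u k - s k = ?W (k+1) - ?W k - ?V k" if "k \<in> {1..n}" for k
    using Wg_V[of k s u] that by auto
  have "(\<Sum>k=1..n. (u k - s k) * ?y k) = (\<Sum>k=1..n. ?y k * (?W (k+1) - ?W k) - ?y k * ?V k)"
    by (rule sum.cong) (auto simp: eq algebra_simps)
  also have "\<dots> = (\<Sum>k=1..n. ?y k * (?W (k+1) - ?W k)) - (\<Sum>k=1..n. ?y k * ?V k)"
    by (simp add: sum_subtractf)
  also have "\<dots> = ?y n * ?W (n+1) - ?y 1 * ?W 1 - (\<Sum>k=2..n. (?y k - ?y (k-1)) * ?W k) - (\<Sum>k=1..n. ?y k * ?V k)"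
    using sum_by_parts[OF n, of ?y ?W] by (simp only:)
  also have "\<dots> = C * ?W (n+1) + (\<Sum>k=2..n. c k * ?W k) + (\<Sum>k=1..n. d k * ?V k)"
  proof -
    have a: "?y n * ?W (n+1) = C * ?W (n+1)"
      using n Wg_nonneg[of s u "n+1"] by (auto simp: yd_def)
    have b: "(\<Sum>k=2..n. (?y k - ?y (k-1)) * ?W k) = - (\<Sum>k=2..n. c k * ?W k)"
    proof -
      have "(\<Sum>k=2..n. (?y k - ?y (k-1)) * ?W k) = (\<Sum>k=2..n. - (c k * ?W k))"
      proof (rule sum.cong)
        fix k assume k: "k \<in> {2..n}"
        have e: "n - (k-1) = Suc (n-k)" "n - (n-k) = k" using k by auto
        have "?y (k-1) = Zd n c d C s u (Suc (n-k))" "?y k = Zd n c d C s u (n-k)"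
          using k e by (auto simp: yd_def)
        then show "(?y k - ?y (k-1)) * ?W k = - (c k * ?W k)"
          using e Wg_nonneg[of s u k] by (auto simp: algebra_simps)
      qed simp
      thus ?thesis by (simp add: sum_negf)
    qed
    have e: "(\<Sum>k=1..n. ?y k * ?V k) = - (\<Sum>k=1..n. d k * ?V k)"
    proof -
      have "(\<Sum>k=1..n. ?y k * ?V k) = (\<Sum>k=1..n. - (d k * ?V k))"
      proof (rule sum.cong)
        fix k assume k: "k \<in> {1..n}"
        show "?y k * ?V k = - (d k * ?V k)"
        proof (cases "0 < ?V k")
          case True
          have w0: "?W (k+1) = 0" using WV_excl[OF _ True] k by auto
          show ?thesis
          proof (cases "k = n")
            case True then show ?thesis using w0 k by (simp add: yd_def)
          next
            case False
            have e: "n - k = Suc (n-k-1)" "n - (n-k-1) = k+1" "n - (n-k-1) - 1 = k" using k False by auto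
            have "?y k = Zd n c d C s u (Suc (n-k-1))" using k e by (simp add: yd_def)
            also have "\<dots> = - d k" using w0 e by (simp only: Zd.simps) simp
            finally show ?thesis by simp
          qed
        next
          case False
          then have "?V k = 0" using Vg_nonneg[of s u k] by linarith
          then show ?thesis by simp
        qed
      qed simp
      thus ?thesis by (simp add: sum_negf)
    qed
    show ?thesis using a b e by simp
  qed
  also have "\<dots> = fcost n c d C s u"
  proof -
    have "(\<Sum>i=1..n. c i * ?W i) = c 1 * ?W 1 + (\<Sum>k=2..n. c k * ?W k)"
      using n by (simp add: sum.atLeast_Suc_atMost numeral_2_eq_2)
    thus ?thesis by (simp add: fcost_def sum.distrib)
  qed
  finally show ?thesis .
qed

lemma recourse_fcost:
  assumes n: "1 \<le> n" and c: "\<forall>i\<in>{1..n}. 0 \<le> c i" and C: "0 \<le> C" and dd: "\<forall>i\<in>{1..n}. 0 \<le> d i"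
    and h: "\<forall>i\<in>{1..n-1}. d (i+1) - d i \<le> c (i+1)"
  shows "recourse n c d C s u = fcost n c d C s u"
  unfolding recourse_def
proof (rule cInf_eq_minimum)
  show "fcost n c d C s u \<in> {(\<Sum>i=1..n. c i * w i + d i * v i) + C * w (n+1) |w v. lp_feasible n s u w v}"
    using greedy_feasible[of n s u] unfolding fcost_def by blast
next
  fix x assume "x \<in> {(\<Sum>i=1..n. c i * w i + d i * v i) + C * w (n+1) |w v. lp_feasible n s u w v}"
  then obtain w v where x: "x = (\<Sum>i=1..n. c i * w i + d i * v i) + C * w (n+1)" and f: "lp_feasible n s u w v"
    by blast
  have "fcost n c d C s u = (\<Sum>k=1..n. (u k - s k) * yd n c d C s u k)" using yd_value[OF n] by simp
  also have "\<dots> \<le> x" unfolding x by (rule weak_duality_lp[OF n c dd f yd_in_Y[OF n c C dd h]])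
  finally show "fcost n c d C s u \<le> x" .
qed

lemma fcost_upper:
  assumes n: "1 \<le> n" and c: "\<forall>i\<in>{1..n}. 0 \<le> c i" and dd: "\<forall>i\<in>{1..n}. 0 \<le> d i"
    and y: "y \<in> Yset n c d C"
  shows "(\<Sum>k=1..n. (u k - s k) * y k) \<le> fcost n c d C s u"
  using weak_duality_lp[OF n c dd greedy_feasible y] unfolding fcost_def .



lemma cont_coord[continuous_intros]: "continuous_on S (\<lambda>x::nat\<Rightarrow>real. x i)"
  by (rule continuous_on_subset[OF continuous_on_product_coordinates]) simp

lemma cont_Wg: "continuous_on S (\<lambda>u. Wg s u k)"
proof (induction k)
  case 0 then show ?case by simp
next
  case (Suc k)
  show ?case
  proof (cases "k = 0")
    case True then show ?thesis by simp
  next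
    case False
    then show ?thesis using Suc by (simp, intro continuous_intros)
  qed
qed

lemma cont_fcost: "continuous_on S (\<lambda>u. fcost n c d C s u)"
  unfolding fcost_def Vg_def by (intro continuous_intros cont_Wg)

lemma meas_fcost[measurable]: "(\<lambda>u. fcost n c d C s u) \<in> borel_measurable borel"
  by (rule borel_measurable_continuous_onI[OF cont_fcost])

lemma fcost_nonneg:
  assumes c: "\<forall>i\<in>{1..n}. 0 \<le> c i" and dd: "\<forall>i\<in>{1..n}. 0 \<le> d i" and C: "0 \<le> C"
  shows "0 \<le> fcost n c d C s u"
  unfolding fcost_def using c dd C
  by (intro add_nonneg_nonneg sum_nonneg mult_nonneg_nonneg Wg_nonneg Vg_nonneg) auto

lemma sum_lt_add: fixes g :: "nat \<Rightarrow> 'a::comm_monoid_add" and m l :: nat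
  shows "(\<Sum>i<m+l. g i) = (\<Sum>i<m. g i) + (\<Sum>k<l. g (m+k))"
  by (induction l) (auto simp: add.assoc)

lemma sum_shift1: fixes g :: "nat \<Rightarrow> 'a::comm_monoid_add" and n a :: nat shows "(\<Sum>k<n. g (a + 1 + k)) = (\<Sum>k=1..n. g (a + k))"
  by (simp add: sum.atLeast1_atMost_eq)

lemma split3: fixes g :: "nat \<Rightarrow> 'a::comm_monoid_add" and n :: nat shows "(\<Sum>i<3*n+1. g i) = g 0 + (\<Sum>k=1..n. g k) + (\<Sum>k=1..n. g (n+k)) + (\<Sum>k=1..n. g (2*n+k))"
proof -
  have "(\<Sum>i<3*n+1. g i) = (\<Sum>i<1+n+n+n. g i)" by (rule arg_cong[where f="\<lambda>m. \<Sum>i<m. g i"]) simp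
  also have "\<dots> = (\<Sum>i<1. g i) + (\<Sum>k<n. g (1+k)) + (\<Sum>k<n. g (1+n+k)) + (\<Sum>k<n. g (1+n+n+k))"
    by (simp only: sum_lt_add)
  also have "\<dots> = g 0 + (\<Sum>k<n. g (0+1+k)) + (\<Sum>k<n. g (n+1+k)) + (\<Sum>k<n. g (2*n+1+k))"
    by (simp add: mult_2 add.commute add.left_commute)
  also have "\<dots> = g 0 + (\<Sum>k=1..n. g k) + (\<Sum>k=1..n. g (n+k)) + (\<Sum>k=1..n. g (2*n+k))"
    by (simp only: sum_shift1) simp
  finally show ?thesis .
qed

lemma split2: fixes g :: "nat \<Rightarrow> 'a::comm_monoid_add" and n :: nat shows "(\<Sum>i<2*n+1. g i) = g 0 + (\<Sum>k=1..n. g k) + (\<Sum>k=1..n. g (n+k))"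
proof -
  have "(\<Sum>i<2*n+1. g i) = (\<Sum>i<1+n+n. g i)" by (rule arg_cong[where f="\<lambda>m. \<Sum>i<m. g i"]) simp
  also have "\<dots> = (\<Sum>i<1. g i) + (\<Sum>k<n. g (1+k)) + (\<Sum>k<n. g (1+n+k))"
    by (simp only: sum_lt_add)
  also have "\<dots> = g 0 + (\<Sum>k<n. g (0+1+k)) + (\<Sum>k<n. g (n+1+k))"
    by (simp add: add.commute add.left_commute)
  also have "\<dots> = g 0 + (\<Sum>k=1..n. g k) + (\<Sum>k=1..n. g (n+k))"
    by (simp only: sum_shift1) simp
  finally show ?thesis .
qed

lemma bnum_b: assumes "k \<in> {1..n}" shows "bnum n (b*n+k) = b+1" "bpos n (b*n+k) = k"
proof -
  have e: "b*n+k-1 = (k-1) + b*n" and l: "k - 1 < n" and n0: "n \<noteq> 0" using assms by auto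
  have "(b*n+k-1) div n = b" unfolding e using l n0 by (simp add: div_mult_self1)
  moreover have "(b*n+k-1) mod n = k - 1" unfolding e using l n0 by (simp add: mod_mult_self1)
  ultimately show "bnum n (b*n+k) = b+1" "bpos n (b*n+k) = k" using assms
    by (auto simp: bnum_def bpos_def)
qed

lemma bnum1: "k \<in> {1..n} \<Longrightarrow> bnum n k = 1 \<and> bpos n k = k"
  using bnum_b[of k n 0] by simp
lemma bnum2: "k \<in> {1..n} \<Longrightarrow> bnum n (n+k) = 2 \<and> bpos n (n+k) = k"
  using bnum_b[of k n 1] by simp
lemma bnum3: "k \<in> {1..n} \<Longrightarrow> bnum n (2*n+k) = 3 \<and> bpos n (2*n+k) = k"
  using bnum_b[of k n 2] by simp
lemma bnum0: "bnum n 0 = 0" by (simp add: bnum_def)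

lemma sum_delta_half: fixes n p :: nat shows "p \<in> {1..n} \<Longrightarrow> (\<Sum>q=1..n. (if p = q then a else 0) * f q) = a * (f p :: real)"
proof -
  assume p: "p \<in> {1..n}"
  have "(\<Sum>q=1..n. (if p = q then a else 0) * f q) = (\<Sum>q=1..n. if p = q then a * f q else 0)"
    by (rule sum.cong) auto
  also have "\<dots> = (if p \<in> {1..n} then a * f p else 0)" by (rule sum.delta') simp
  also have "\<dots> = a * f p" using p by simp
  finally show ?thesis .
qed

lemma sum_delta_half': fixes n p :: nat shows "p \<in> {1..n} \<Longrightarrow> (\<Sum>q=1..n. f q * (if q = p then a else 0)) = (f p :: real) * a"
proof -
  assume p: "p \<in> {1..n}"
  have "(\<Sum>q=1..n. f q * (if q = p then a else 0)) = (\<Sum>q=1..n. if q = p then f q * a else 0)"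
    by (rule sum.cong) auto
  also have "\<dots> = (if p \<in> {1..n} then f p * a else 0)" by (rule sum.delta) simp
  also have "\<dots> = f p * a" using p by simp
  finally show ?thesis .
qed



definition qf :: "nat \<Rightarrow> (nat \<Rightarrow> nat \<Rightarrow> real) \<Rightarrow> (nat \<Rightarrow> real) \<Rightarrow> real" where
  "qf k M x = (\<Sum>i<k. \<Sum>j<k. x i * M i j * x j)"

lemma dsum_delta: fixes k :: nat shows "0 < k \<Longrightarrow> (\<Sum>i<k. \<Sum>j<k. if i = 0 then if j = 0 then a else 0 else (0::real)) = a"
proof -
  assume k: "0 < k"
  have "(\<Sum>i<k. \<Sum>j<k. if i = 0 then if j = 0 then a else 0 else (0::real)) = (\<Sum>i<k. if i = 0 then a else 0)"
  proof (rule sum.cong[OF refl])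
    fix i show "(\<Sum>j<k. if i = 0 then if j = 0 then a else 0 else (0::real)) = (if i = 0 then a else 0)"
      using k by (cases "i = 0") (simp_all add: sum.delta)
  qed
  also have "\<dots> = a" using k by (simp add: sum.delta)
  finally show ?thesis .
qed

lemma qf_shift: "0 < k \<Longrightarrow> qf k (shiftM \<beta> H) x = \<beta> * (x 0)^2 - (\<Sum>i<k. x i * (\<Sum>j<k. H i j * x j))"
proof -
  assume k: "0 < k"
  have e: "x i * shiftM \<beta> H i j * x j = (if i = 0 then (if j = 0 then x 0 * \<beta> * x 0 else 0) else 0) - x i * (H i j * x j)" for i j
    by (simp add: shiftM_def algebra_simps)
  have "qf k (shiftM \<beta> H) x = (\<Sum>i<k. (\<Sum>j<k. (if i = 0 then (if j = 0 then x 0 * \<beta> * x 0 else 0) else 0)) - x i * (\<Sum>j<k. H i j * x j))"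
    unfolding qf_def e by (simp add: sum_subtractf sum_distrib_left)
  also have "\<dots> = (\<Sum>i<k. \<Sum>j<k. (if i = 0 then (if j = 0 then x 0 * \<beta> * x 0 else 0) else 0)) - (\<Sum>i<k. x i * (\<Sum>j<k. H i j * x j))"
    by (simp add: sum_subtractf)
  also have "\<dots> = \<beta> * (x 0)^2 - (\<Sum>i<k. x i * (\<Sum>j<k. H i j * x j))"
    unfolding dsum_delta[OF k] by (simp add: power2_eq_square)
  finally show ?thesis .
qed

context
  fixes n :: nat and uhj s :: "nat \<Rightarrow> real" and \<rho> :: real
begin

lemma H1e00: "H1 n uhj \<rho> s 0 0 = 0"
  by (simp add: H1_def Let_def bnum0)

lemma H1e0:
  assumes q: "1 \<le> q" "q \<le> n"
  shows "H1 n uhj \<rho> s 0 q = - \<rho> / 2" "H1 n uhj \<rho> s 0 (n+q) = - \<rho> / 2" "H1 n uhj \<rho> s 0 (2*n+q) = (uhj q - s q) / 2"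
  using bnum1[of q n] bnum2[of q n] bnum3[of q n] bnum0[of n] q
  by (simp_all add: H1_def Let_def)

lemma H1e:
  assumes p: "1 \<le> p" "p \<le> n" and q: "1 \<le> q" "q \<le> n"
  shows "H1 n uhj \<rho> s p 0 = - \<rho> / 2" "H1 n uhj \<rho> s p q = 0" "H1 n uhj \<rho> s p (n+q) = 0"
    "H1 n uhj \<rho> s p (2*n+q) = (if p = q then 1/2 else 0)"
    "H1 n uhj \<rho> s (n+p) 0 = - \<rho> / 2" "H1 n uhj \<rho> s (n+p) q = 0" "H1 n uhj \<rho> s (n+p) (n+q) = 0"
    "H1 n uhj \<rho> s (n+p) (2*n+q) = (if p = q then - 1/2 else 0)"
    "H1 n uhj \<rho> s (2*n+p) 0 = (uhj p - s p) / 2" "H1 n uhj \<rho> s (2*n+p) q = (if p = q then 1/2 else 0)"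
    "H1 n uhj \<rho> s (2*n+p) (n+q) = (if p = q then - 1/2 else 0)" "H1 n uhj \<rho> s (2*n+p) (2*n+q) = 0"
  using bnum1[of p n] bnum2[of p n] bnum3[of p n] bnum1[of q n] bnum2[of q n] bnum3[of q n] bnum0[of n] p q
  by (simp_all add: H1_def Let_def)

lemma H1_rows:
  "(\<Sum>j<3*n+1. H1 n uhj \<rho> s 0 j * x j) = - \<rho> / 2 * (\<Sum>q=1..n. x q) - \<rho> / 2 * (\<Sum>q=1..n. x (n+q)) + (\<Sum>q=1..n. (uhj q - s q) / 2 * x (2*n+q))"
  "1 \<le> p \<Longrightarrow> p \<le> n \<Longrightarrow> (\<Sum>j<3*n+1. H1 n uhj \<rho> s p j * x j) = - \<rho> / 2 * x 0 + 1/2 * x (2*n+p)"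
  "1 \<le> p \<Longrightarrow> p \<le> n \<Longrightarrow> (\<Sum>j<3*n+1. H1 n uhj \<rho> s (n+p) j * x j) = - \<rho> / 2 * x 0 - 1/2 * x (2*n+p)"
  "1 \<le> p \<Longrightarrow> p \<le> n \<Longrightarrow> (\<Sum>j<3*n+1. H1 n uhj \<rho> s (2*n+p) j * x j) = (uhj p - s p) / 2 * x 0 + 1/2 * x p - 1/2 * x (n+p)"
proof -
  show "(\<Sum>j<3*n+1. H1 n uhj \<rho> s 0 j * x j) = - \<rho> / 2 * (\<Sum>q=1..n. x q) - \<rho> / 2 * (\<Sum>q=1..n. x (n+q)) + (\<Sum>q=1..n. (uhj q - s q) / 2 * x (2*n+q))"
    unfolding split3 by (simp add: H1e00 H1e0 sum_distrib_left sum_negf sum_divide_distrib)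
next
  assume p: "1 \<le> p" "p \<le> n"
  have pn: "p \<in> {1..n}" using p by simp
  show "(\<Sum>j<3*n+1. H1 n uhj \<rho> s p j * x j) = - \<rho> / 2 * x 0 + 1/2 * x (2*n+p)"
    unfolding split3 using p sum_delta_half[OF pn, of "1/2" "\<lambda>q. x (2*n+q)"] by (simp add: H1e[OF p])
  show "(\<Sum>j<3*n+1. H1 n uhj \<rho> s (n+p) j * x j) = - \<rho> / 2 * x 0 - 1/2 * x (2*n+p)"
    unfolding split3 using p sum_delta_half[OF pn, of "- 1/2" "\<lambda>q. x (2*n+q)"] by (simp add: H1e[OF p])
  show "(\<Sum>j<3*n+1. H1 n uhj \<rho> s (2*n+p) j * x j) = (uhj p - s p) / 2 * x 0 + 1/2 * x p - 1/2 * x (n+p)"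
    unfolding split3 using p sum_delta_half[OF pn, of "- 1/2" "\<lambda>q. x (n+q)"] sum_delta_half[OF pn, of "1/2" "\<lambda>q. x q"]
    by (simp add: H1e[OF p])
qed

lemma QF1:
  "qf (3*n+1) (shiftM \<beta> (H1 n uhj \<rho> s)) x = \<beta> * (x 0)^2 -
     (- \<rho> * x 0 * (\<Sum>k=1..n. x k + x (n+k)) + x 0 * (\<Sum>k=1..n. (uhj k - s k) * x (2*n+k))
      + (\<Sum>k=1..n. (x k - x (n+k)) * x (2*n+k)))"
proof -
  have "(\<Sum>i<3*n+1. x i * (\<Sum>j<3*n+1. H1 n uhj \<rho> s i j * x j)) =
     x 0 * (- \<rho> / 2 * (\<Sum>q=1..n. x q) - \<rho> / 2 * (\<Sum>q=1..n. x (n+q)) + (\<Sum>q=1..n. (uhj q - s q) / 2 * x (2*n+q)))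
     + (\<Sum>p=1..n. x p * (- \<rho> / 2 * x 0 + 1/2 * x (2*n+p)))
     + (\<Sum>p=1..n. x (n+p) * (- \<rho> / 2 * x 0 - 1/2 * x (2*n+p)))
     + (\<Sum>p=1..n. x (2*n+p) * ((uhj p - s p) / 2 * x 0 + 1/2 * x p - 1/2 * x (n+p)))"
  proof -
    have a: "(\<Sum>p=1..n. x p * (\<Sum>j<3*n+1. H1 n uhj \<rho> s p j * x j)) = (\<Sum>p=1..n. x p * (- \<rho> / 2 * x 0 + 1/2 * x (2*n+p)))"
      by (rule sum.cong[OF refl]) (subst H1_rows(2), auto)
    have b: "(\<Sum>p=1..n. x (n+p) * (\<Sum>j<3*n+1. H1 n uhj \<rho> s (n+p) j * x j)) = (\<Sum>p=1..n. x (n+p) * (- \<rho> / 2 * x 0 - 1/2 * x (2*n+p)))"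
      by (rule sum.cong[OF refl]) (subst H1_rows(3), auto)
    have c: "(\<Sum>p=1..n. x (2*n+p) * (\<Sum>j<3*n+1. H1 n uhj \<rho> s (2*n+p) j * x j)) = (\<Sum>p=1..n. x (2*n+p) * ((uhj p - s p) / 2 * x 0 + 1/2 * x p - 1/2 * x (n+p)))"
      by (rule sum.cong[OF refl]) (subst H1_rows(4), auto)
    show ?thesis
      unfolding split3[of "\<lambda>i. x i * (\<Sum>j<3*n+1. H1 n uhj \<rho> s i j * x j)"] a b c H1_rows(1) ..
  qed
  also have "\<dots> = - \<rho> * x 0 * (\<Sum>k=1..n. x k + x (n+k)) + x 0 * (\<Sum>k=1..n. (uhj k - s k) * x (2*n+k))
      + (\<Sum>k=1..n. (x k - x (n+k)) * x (2*n+k))"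
    by (simp only: sum_distrib_left sum.distrib[symmetric] sum_subtractf[symmetric])
       (rule sum.cong[OF refl], simp add: algebra_simps)
  finally show ?thesis by (simp add: qf_shift)
qed

lemma H2e00: "H2 n uhj \<rho> s 0 0 = - \<rho> * (\<Sum>k=1..n. (uhj k)\<^sup>2)"
  by (simp add: H2_def Let_def bnum0)

lemma H2e0:
  assumes q: "1 \<le> q" "q \<le> n"
  shows "H2 n uhj \<rho> s 0 q = \<rho> * uhj q" "H2 n uhj \<rho> s 0 (n+q) = - s q / 2"
  using bnum1[of q n] bnum2[of q n] bnum0[of n] q
  by (simp_all add: H2_def Let_def)

lemma H2e:
  assumes p: "1 \<le> p" "p \<le> n" and q: "1 \<le> q" "q \<le> n"
  shows "H2 n uhj \<rho> s p 0 = \<rho> * uhj p" "H2 n uhj \<rho> s p q = (if p = q then - \<rho> else 0)"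
    "H2 n uhj \<rho> s p (n+q) = (if p = q then 1/2 else 0)"
    "H2 n uhj \<rho> s (n+p) 0 = - s p / 2" "H2 n uhj \<rho> s (n+p) q = (if p = q then 1/2 else 0)"
    "H2 n uhj \<rho> s (n+p) (n+q) = 0"
  using bnum1[of p n] bnum2[of p n] bnum1[of q n] bnum2[of q n] bnum0[of n] p q
  by (simp_all add: H2_def Let_def)

lemma H2_rows:
  "(\<Sum>j<2*n+1. H2 n uhj \<rho> s 0 j * x j) = - \<rho> * (\<Sum>k=1..n. (uhj k)\<^sup>2) * x 0 + (\<Sum>q=1..n. \<rho> * uhj q * x q) + (\<Sum>q=1..n. - s q / 2 * x (n+q))"
  "1 \<le> p \<Longrightarrow> p \<le> n \<Longrightarrow> (\<Sum>j<2*n+1. H2 n uhj \<rho> s p j * x j) = \<rho> * uhj p * x 0 - \<rho> * x p + 1/2 * x (n+p)"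
  "1 \<le> p \<Longrightarrow> p \<le> n \<Longrightarrow> (\<Sum>j<2*n+1. H2 n uhj \<rho> s (n+p) j * x j) = - s p / 2 * x 0 + 1/2 * x p"
proof -
  show "(\<Sum>j<2*n+1. H2 n uhj \<rho> s 0 j * x j) = - \<rho> * (\<Sum>k=1..n. (uhj k)\<^sup>2) * x 0 + (\<Sum>q=1..n. \<rho> * uhj q * x q) + (\<Sum>q=1..n. - s q / 2 * x (n+q))"
    unfolding split2 by (simp add: H2e00 H2e0)
next
  assume p: "1 \<le> p" "p \<le> n"
  have pn: "p \<in> {1..n}" using p by simp
  show "(\<Sum>j<2*n+1. H2 n uhj \<rho> s p j * x j) = \<rho> * uhj p * x 0 - \<rho> * x p + 1/2 * x (n+p)"
    unfolding split2 using p sum_delta_half[OF pn, of "1/2" "\<lambda>q. x (n+q)"] sum_delta_half[OF pn, of "- \<rho>" "\<lambda>q. x q"]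
    by (simp add: H2e[OF p])
  show "(\<Sum>j<2*n+1. H2 n uhj \<rho> s (n+p) j * x j) = - s p / 2 * x 0 + 1/2 * x p"
    unfolding split2 using p sum_delta_half[OF pn, of "1/2" "\<lambda>q. x q"] by (simp add: H2e[OF p])
qed

lemma QF2:
  "qf (2*n+1) (shiftM \<beta> (H2 n uhj \<rho> s)) x = \<beta> * (x 0)^2 -
     (\<Sum>k=1..n. (x k - x 0 * s k) * x (n+k) - \<rho> * (x k - x 0 * uhj k)^2)"
proof -
  have "(\<Sum>i<2*n+1. x i * (\<Sum>j<2*n+1. H2 n uhj \<rho> s i j * x j)) =
     x 0 * (- \<rho> * (\<Sum>k=1..n. (uhj k)\<^sup>2) * x 0 + (\<Sum>q=1..n. \<rho> * uhj q * x q) + (\<Sum>q=1..n. - s q / 2 * x (n+q)))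
     + (\<Sum>p=1..n. x p * (\<rho> * uhj p * x 0 - \<rho> * x p + 1/2 * x (n+p)))
     + (\<Sum>p=1..n. x (n+p) * (- s p / 2 * x 0 + 1/2 * x p))"
  proof -
    have a: "(\<Sum>p=1..n. x p * (\<Sum>j<2*n+1. H2 n uhj \<rho> s p j * x j)) = (\<Sum>p=1..n. x p * (\<rho> * uhj p * x 0 - \<rho> * x p + 1/2 * x (n+p)))"
      by (rule sum.cong[OF refl]) (subst H2_rows(2), auto)
    have b: "(\<Sum>p=1..n. x (n+p) * (\<Sum>j<2*n+1. H2 n uhj \<rho> s (n+p) j * x j)) = (\<Sum>p=1..n. x (n+p) * (- s p / 2 * x 0 + 1/2 * x p))"
      by (rule sum.cong[OF refl]) (subst H2_rows(3), auto)
    show ?thesis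
      unfolding split2[of "\<lambda>i. x i * (\<Sum>j<2*n+1. H2 n uhj \<rho> s i j * x j)"] a b H2_rows(1) ..
  qed
  also have "\<dots> = (\<Sum>k=1..n. (x k - x 0 * s k) * x (n+k) - \<rho> * (x k - x 0 * uhj k)^2)"
    by (simp only: sum_distrib_left sum_distrib_right sum.distrib[symmetric] sum_subtractf[symmetric])
       (rule sum.cong[OF refl], simp add: algebra_simps power2_eq_square)
  finally show ?thesis by (simp add: qf_shift)
qed

end



lemma pnorm1: "pnorm_pow 1 n u v = (\<Sum>i=1..n. \<bar>u i - v i\<bar>)"
  by (simp add: pnorm_pow_def)

lemma pnorm2: "pnorm_pow 2 n u v = (\<Sum>i=1..n. (u i - v i)\<^sup>2)"
  by (simp add: pnorm_pow_def)

lemma H1_sym: "H1 n uhj \<rho> s i j = H1 n uhj \<rho> s j i"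
  unfolding H1_def Let_def
  by (cases "bnum n i = 0"; cases "bnum n j = 0"; cases "bnum n i = 1"; cases "bnum n j = 1"; cases "bnum n i = 2"; cases "bnum n j = 2"; cases "bnum n i = 3"; cases "bnum n j = 3"; simp)
lemma H2_sym: "H2 n uhj \<rho> s i j = H2 n uhj \<rho> s j i"
  unfolding H2_def Let_def
  by (cases "bnum n i = 0"; cases "bnum n j = 0"; cases "bnum n i = 1"; cases "bnum n j = 1"; cases "bnum n i = 2"; cases "bnum n j = 2"; simp)

lemma shiftM_sym: "(\<And>i j. H i j = H j i) \<Longrightarrow> shiftM \<beta> H i j = shiftM \<beta> H j i"
  by (auto simp: shiftM_def)

lemma cont_qf: "continuous_on UNIV (\<lambda>x. qf k M x)"
  unfolding qf_def by (intro continuous_intros)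

lemma closure_qf:
  assumes "\<forall>x\<in>S. 0 \<le> qf k M x"
  shows "\<forall>x\<in>closure S. 0 \<le> qf k M x"
proof -
  have "closure S \<subseteq> {x. (\<lambda>x. 0) x \<le> qf k M x}"
    by (rule closure_minimal) (use assms in \<open>auto intro!: closed_Collect_le cont_qf\<close>)
  thus ?thesis by auto
qed

lemma vecs_out: "v \<in> vecs n \<Longrightarrow> \<not> (1 \<le> i \<and> i \<le> n) \<Longrightarrow> v i = 0"
  unfolding vecs_def by (cases "i = 0") auto

definition G1 :: "nat \<Rightarrow> (nat \<Rightarrow> real) \<Rightarrow> real \<Rightarrow> (nat \<Rightarrow> real) \<Rightarrow> (nat \<Rightarrow> real) \<Rightarrow> (nat \<Rightarrow> real) \<Rightarrow> (nat \<Rightarrow> real) \<Rightarrow> real" where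
  "G1 n uhj \<rho> s up um y = (\<Sum>k=1..n. (up k - um k + uhj k - s k) * y k) - \<rho> * (\<Sum>k=1..n. up k + um k)"

definition G2 :: "nat \<Rightarrow> (nat \<Rightarrow> real) \<Rightarrow> real \<Rightarrow> (nat \<Rightarrow> real) \<Rightarrow> (nat \<Rightarrow> real) \<Rightarrow> (nat \<Rightarrow> real) \<Rightarrow> real" where
  "G2 n uhj \<rho> s u y = (\<Sum>k=1..n. (u k - s k) * y k) - \<rho> * (\<Sum>k=1..n. (u k - uhj k)\<^sup>2)"

lemma blk_vecs: "blk n x b \<in> vecs n"
  unfolding blk_def vecs_def by auto

lemma COP1_iff:
  "shiftM \<beta> (H1 n uhj \<rho> s) \<in> COP (3*n+1) (K1 n c d C U uhj) \<longleftrightarrow>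
   (\<forall>up um y. (up, um, y) \<in> F1 n c d C U uhj \<longrightarrow> G1 n uhj \<rho> s up um y \<le> \<beta>)"
proof
  assume cop: "shiftM \<beta> (H1 n uhj \<rho> s) \<in> COP (3*n+1) (K1 n c d C U uhj)"
  show "\<forall>up um y. (up, um, y) \<in> F1 n c d C U uhj \<longrightarrow> G1 n uhj \<rho> s up um y \<le> \<beta>"
  proof (intro allI impI)
    fix up um y assume F: "(up, um, y) \<in> F1 n c d C U uhj"
    have vu: "up \<in> vecs n" "um \<in> vecs n" "y \<in> vecs n" using F unfolding F1_def Yset_def by auto
    define x where "x = (\<lambda>i. if i = 0 then 1 else if i \<le> n then up i else if i \<le> 2*n then um (i-n)
       else if i \<le> 3*n then y (i - 2*n) else (0::real))"
    have x0: "x 0 = 1" by (simp add: x_def)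
    have xb: "x k = up k" "x (n+k) = um k" "x (2*n+k) = y k" if "k \<in> {1..n}" for k
      using that by (auto simp: x_def)
    have blk0: "blk n x 0 = up" and blk1: "blk n x 1 = um" and blk2: "blk n x 2 = y"
      by (auto simp: blk_def xb vecs_out[OF vu(1)] vecs_out[OF vu(2)] vecs_out[OF vu(3)])
    have "x \<in> vecs0 (3*n+1)" unfolding vecs0_def x_def by auto
    hence "x \<in> K1 n c d C U uhj"
      unfolding K1_def using F x0 blk0 blk1 blk2 by (intro subsetD[OF closure_subset]) auto
    hence "0 \<le> qf (3*n+1) (shiftM \<beta> (H1 n uhj \<rho> s)) x"
      using cop unfolding COP_def qf_def by auto
    also have "qf (3*n+1) (shiftM \<beta> (H1 n uhj \<rho> s)) x = \<beta> - G1 n uhj \<rho> s up um y"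
    proof -
      have "(\<Sum>k=1..n. x k + x (n+k)) = (\<Sum>k=1..n. up k + um k)" by (rule sum.cong) (auto simp: xb)
      moreover have "(\<Sum>k=1..n. (uhj k - s k) * x (2*n+k)) = (\<Sum>k=1..n. (uhj k - s k) * y k)" by (rule sum.cong) (auto simp: xb)
      moreover have "(\<Sum>k=1..n. (x k - x (n+k)) * x (2*n+k)) = (\<Sum>k=1..n. (up k - um k) * y k)" by (rule sum.cong) (auto simp: xb)
      moreover have "(\<Sum>k=1..n. (up k - um k + uhj k - s k) * y k) = (\<Sum>k=1..n. (uhj k - s k) * y k) + (\<Sum>k=1..n. (up k - um k) * y k)"
        by (simp add: sum.distrib[symmetric] algebra_simps)
      ultimately show ?thesis unfolding QF1 G1_def x0 by simp
    qed
    finally show "G1 n uhj \<rho> s up um y \<le> \<beta>" by simp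
  qed
next
  assume H: "\<forall>up um y. (up, um, y) \<in> F1 n c d C U uhj \<longrightarrow> G1 n uhj \<rho> s up um y \<le> \<beta>"
  have sym: "\<forall>i<3*n+1. \<forall>j<3*n+1. shiftM \<beta> (H1 n uhj \<rho> s) i j = shiftM \<beta> (H1 n uhj \<rho> s) j i"
  proof (intro allI impI)
    fix i j show "shiftM \<beta> (H1 n uhj \<rho> s) i j = shiftM \<beta> (H1 n uhj \<rho> s) j i"
      by (rule shiftM_sym) (rule H1_sym)
  qed
  have "\<forall>x\<in>{x \<in> vecs0 (3*n+1). 0 < x 0 \<and>
      ((\<lambda>i. blk n x 0 i / x 0), (\<lambda>i. blk n x 1 i / x 0), (\<lambda>i. blk n x 2 i / x 0)) \<in> F1 n c d C U uhj}.
      0 \<le> qf (3*n+1) (shiftM \<beta> (H1 n uhj \<rho> s)) x"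
  proof
    fix x assume "x \<in> {x \<in> vecs0 (3*n+1). 0 < x 0 \<and>
      ((\<lambda>i. blk n x 0 i / x 0), (\<lambda>i. blk n x 1 i / x 0), (\<lambda>i. blk n x 2 i / x 0)) \<in> F1 n c d C U uhj}"
    then have t: "0 < x 0" and F: "((\<lambda>i. blk n x 0 i / x 0), (\<lambda>i. blk n x 1 i / x 0), (\<lambda>i. blk n x 2 i / x 0)) \<in> F1 n c d C U uhj"
      by auto
    define t where "t = x 0"
    define up where "up = (\<lambda>i. blk n x 0 i / x 0)"
    define um where "um = (\<lambda>i. blk n x 1 i / x 0)"
    define y where "y = (\<lambda>i. blk n x 2 i / x 0)"
    have G: "G1 n uhj \<rho> s up um y \<le> \<beta>" using H F unfolding up_def um_def y_def by blast
    have xb: "x k = t * up k" "x (n+k) = t * um k" "x (2*n+k) = t * y k" if "k \<in> {1..n}" for k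
      using that t by (auto simp: up_def um_def y_def blk_def t_def)
    have "qf (3*n+1) (shiftM \<beta> (H1 n uhj \<rho> s)) x = t^2 * (\<beta> - G1 n uhj \<rho> s up um y)"
    proof -
      have "(\<Sum>k=1..n. x k + x (n+k)) = t * (\<Sum>k=1..n. up k + um k)"
        unfolding sum_distrib_left by (rule sum.cong[OF refl]) (use xb in \<open>simp add: algebra_simps\<close>)
      moreover have "(\<Sum>k=1..n. (uhj k - s k) * x (2*n+k)) = t * (\<Sum>k=1..n. (uhj k - s k) * y k)"
        unfolding sum_distrib_left by (rule sum.cong[OF refl]) (use xb in \<open>simp add: algebra_simps\<close>)
      moreover have "(\<Sum>k=1..n. (x k - x (n+k)) * x (2*n+k)) = t^2 * (\<Sum>k=1..n. (up k - um k) * y k)"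
        unfolding sum_distrib_left by (rule sum.cong[OF refl]) (use xb in \<open>simp add: algebra_simps power2_eq_square\<close>)
      moreover have "(\<Sum>k=1..n. (up k - um k + uhj k - s k) * y k) = (\<Sum>k=1..n. (uhj k - s k) * y k) + (\<Sum>k=1..n. (up k - um k) * y k)"
        by (simp add: sum.distrib[symmetric] algebra_simps)
      ultimately show ?thesis unfolding QF1 G1_def t_def[symmetric] by (simp add: algebra_simps power2_eq_square)
    qed
    moreover have "0 \<le> t^2 * (\<beta> - G1 n uhj \<rho> s up um y)" using G by simp
    ultimately show "0 \<le> qf (3*n+1) (shiftM \<beta> (H1 n uhj \<rho> s)) x" by simp
  qed
  then have "\<forall>x\<in>K1 n c d C U uhj. 0 \<le> qf (3*n+1) (shiftM \<beta> (H1 n uhj \<rho> s)) x"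
    unfolding K1_def by (rule closure_qf)
  then show "shiftM \<beta> (H1 n uhj \<rho> s) \<in> COP (3*n+1) (K1 n c d C U uhj)"
    using sym unfolding COP_def qf_def by blast
qed

lemma COP2_iff:
  assumes Uv: "U \<subseteq> vecs n"
  shows "shiftM \<beta> (H2 n uhj \<rho> s) \<in> COP (2*n+1) (K2 n c d C U) \<longleftrightarrow>
   (\<forall>u y. (u, y) \<in> F2 n c d C U \<longrightarrow> G2 n uhj \<rho> s u y \<le> \<beta>)"
proof
  assume cop: "shiftM \<beta> (H2 n uhj \<rho> s) \<in> COP (2*n+1) (K2 n c d C U)"
  show "\<forall>u y. (u, y) \<in> F2 n c d C U \<longrightarrow> G2 n uhj \<rho> s u y \<le> \<beta>"
  proof (intro allI impI)
    fix u y assume F: "(u, y) \<in> F2 n c d C U"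
    have vu: "u \<in> vecs n" "y \<in> vecs n" using F Uv unfolding F2_def Yset_def by auto
    define x where "x = (\<lambda>i. if i = 0 then 1 else if i \<le> n then u i else if i \<le> 2*n then y (i-n) else (0::real))"
    have x0: "x 0 = 1" by (simp add: x_def)
    have xb: "x k = u k" "x (n+k) = y k" if "k \<in> {1..n}" for k
      using that by (auto simp: x_def)
    have blk0: "blk n x 0 = u" and blk1: "blk n x 1 = y"
      by (auto simp: blk_def xb vecs_out[OF vu(1)] vecs_out[OF vu(2)])
    have "x \<in> vecs0 (2*n+1)" unfolding vecs0_def x_def by auto
    hence "x \<in> K2 n c d C U"
      unfolding K2_def using F x0 blk0 blk1 by (intro subsetD[OF closure_subset]) auto
    hence "0 \<le> qf (2*n+1) (shiftM \<beta> (H2 n uhj \<rho> s)) x"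
      using cop unfolding COP_def qf_def by auto
    also have "qf (2*n+1) (shiftM \<beta> (H2 n uhj \<rho> s)) x = \<beta> - G2 n uhj \<rho> s u y"
    proof -
      have "(\<Sum>k=1..n. (x k - x 0 * s k) * x (n+k) - \<rho> * (x k - x 0 * uhj k)^2) = G2 n uhj \<rho> s u y"
        unfolding G2_def sum_distrib_left sum_subtractf[symmetric] by (rule sum.cong) (auto simp: xb x0)
      thus ?thesis unfolding QF2 x0 by simp
    qed
    finally show "G2 n uhj \<rho> s u y \<le> \<beta>" by simp
  qed
next
  assume H: "\<forall>u y. (u, y) \<in> F2 n c d C U \<longrightarrow> G2 n uhj \<rho> s u y \<le> \<beta>"
  have sym: "\<forall>i<2*n+1. \<forall>j<2*n+1. shiftM \<beta> (H2 n uhj \<rho> s) i j = shiftM \<beta> (H2 n uhj \<rho> s) j i"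
  proof (intro allI impI)
    fix i j show "shiftM \<beta> (H2 n uhj \<rho> s) i j = shiftM \<beta> (H2 n uhj \<rho> s) j i"
      by (rule shiftM_sym) (rule H2_sym)
  qed
  have "\<forall>x\<in>{x \<in> vecs0 (2*n+1). 0 < x 0 \<and>
      ((\<lambda>i. blk n x 0 i / x 0), (\<lambda>i. blk n x 1 i / x 0)) \<in> F2 n c d C U}.
      0 \<le> qf (2*n+1) (shiftM \<beta> (H2 n uhj \<rho> s)) x"
  proof
    fix x assume "x \<in> {x \<in> vecs0 (2*n+1). 0 < x 0 \<and>
      ((\<lambda>i. blk n x 0 i / x 0), (\<lambda>i. blk n x 1 i / x 0)) \<in> F2 n c d C U}"
    then have t: "0 < x 0" and F: "((\<lambda>i. blk n x 0 i / x 0), (\<lambda>i. blk n x 1 i / x 0)) \<in> F2 n c d C U"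
      by auto
    define t where "t = x 0"
    define u where "u = (\<lambda>i. blk n x 0 i / x 0)"
    define y where "y = (\<lambda>i. blk n x 1 i / x 0)"
    have G: "G2 n uhj \<rho> s u y \<le> \<beta>" using H F unfolding u_def y_def by blast
    have xb: "x k = t * u k" "x (n+k) = t * y k" if "k \<in> {1..n}" for k
      using that t by (auto simp: u_def y_def blk_def t_def)
    have "qf (2*n+1) (shiftM \<beta> (H2 n uhj \<rho> s)) x = t^2 * (\<beta> - G2 n uhj \<rho> s u y)"
    proof -
      have "(\<Sum>k=1..n. (x k - x 0 * s k) * x (n+k) - \<rho> * (x k - x 0 * uhj k)^2) = t^2 * G2 n uhj \<rho> s u y"
        unfolding G2_def right_diff_distrib sum_distrib_left sum_subtractf[symmetric] t_def[symmetric]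
        by (rule sum.cong[OF refl]) (use xb in \<open>simp add: algebra_simps power2_eq_square\<close>)
      thus ?thesis unfolding QF2 t_def[symmetric] by (simp add: algebra_simps)
    qed
    moreover have "0 \<le> t^2 * (\<beta> - G2 n uhj \<rho> s u y)" using G by simp
    ultimately show "0 \<le> qf (2*n+1) (shiftM \<beta> (H2 n uhj \<rho> s)) x" by simp
  qed
  then have "\<forall>x\<in>K2 n c d C U. 0 \<le> qf (2*n+1) (shiftM \<beta> (H2 n uhj \<rho> s)) x"
    unfolding K2_def by (rule closure_qf)
  then show "shiftM \<beta> (H2 n uhj \<rho> s) \<in> COP (2*n+1) (K2 n c d C U)"
    using sym unfolding COP_def qf_def by blast
qed



locale hyps =
  fixes n :: nat and c d :: "nat \<Rightarrow> real" and C :: real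
  assumes n: "1 \<le> n" and c: "\<forall>i\<in>{1..n}. 0 \<le> c i" and dd: "\<forall>i\<in>{1..n}. 0 \<le> d i" and C: "0 \<le> C"
    and h: "\<forall>i\<in>{1..n-1}. d (i+1) - d i \<le> c (i+1)"
begin

lemma yd_Y: "yd n c d C s u \<in> Yset n c d C"
  by (rule yd_in_Y[OF n c C dd h])

lemma fcost_ge: "y \<in> Yset n c d C \<Longrightarrow> (\<Sum>k=1..n. (u k - s k) * y k) \<le> fcost n c d C s u"
  by (rule fcost_upper[OF n c dd])

lemma fcost_eq: "(\<Sum>k=1..n. (u k - s k) * yd n c d C s u k) = fcost n c d C s u"
  by (rule yd_value[OF n])

lemma recourse_eq: "recourse n c d C s u = fcost n c d C s u"
  by (rule recourse_fcost[OF n c C dd h])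

lemma fcost_nn: "0 \<le> fcost n c d C s u"
  by (rule fcost_nonneg[OF c dd C])

lemma feas2_iff:
  "(\<forall>u y. (u, y) \<in> F2 n c d C U \<longrightarrow> G2 n uhj \<rho> s u y \<le> \<beta>) \<longleftrightarrow>
   (\<forall>u\<in>U. fcost n c d C s u - \<rho> * pnorm_pow 2 n u uhj \<le> \<beta>)"
proof
  assume H: "\<forall>u y. (u, y) \<in> F2 n c d C U \<longrightarrow> G2 n uhj \<rho> s u y \<le> \<beta>"
  show "\<forall>u\<in>U. fcost n c d C s u - \<rho> * pnorm_pow 2 n u uhj \<le> \<beta>"
  proof
    fix u assume u: "u \<in> U"
    have "(u, yd n c d C s u) \<in> F2 n c d C U" using u yd_Y unfolding F2_def by auto
    hence "G2 n uhj \<rho> s u (yd n c d C s u) \<le> \<beta>" using H by blast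
    thus "fcost n c d C s u - \<rho> * pnorm_pow 2 n u uhj \<le> \<beta>"
      unfolding G2_def pnorm2 fcost_eq .
  qed
next
  assume H: "\<forall>u\<in>U. fcost n c d C s u - \<rho> * pnorm_pow 2 n u uhj \<le> \<beta>"
  show "\<forall>u y. (u, y) \<in> F2 n c d C U \<longrightarrow> G2 n uhj \<rho> s u y \<le> \<beta>"
  proof (intro allI impI)
    fix u y assume "(u, y) \<in> F2 n c d C U"
    hence u: "u \<in> U" and y: "y \<in> Yset n c d C" unfolding F2_def by auto
    have "G2 n uhj \<rho> s u y \<le> fcost n c d C s u - \<rho> * pnorm_pow 2 n u uhj"
      unfolding G2_def pnorm2 using fcost_ge[OF y, of u s] by simp
    also have "\<dots> \<le> \<beta>" using H u by blast
    finally show "G2 n uhj \<rho> s u y \<le> \<beta>" .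
  qed
qed

lemma feas1_iff:
  assumes \<rho>: "0 \<le> \<rho>" and uhj: "uhj \<in> vecs n" and Uv: "U \<subseteq> vecs n"
  shows "(\<forall>up um y. (up, um, y) \<in> F1 n c d C U uhj \<longrightarrow> G1 n uhj \<rho> s up um y \<le> \<beta>) \<longleftrightarrow>
   (\<forall>u\<in>U. fcost n c d C s u - \<rho> * pnorm_pow 1 n u uhj \<le> \<beta>)"
proof
  assume H: "\<forall>up um y. (up, um, y) \<in> F1 n c d C U uhj \<longrightarrow> G1 n uhj \<rho> s up um y \<le> \<beta>"
  show "\<forall>u\<in>U. fcost n c d C s u - \<rho> * pnorm_pow 1 n u uhj \<le> \<beta>"
  proof
    fix u assume u: "u \<in> U"
    have uv: "u \<in> vecs n" using u Uv by auto
    define up where "up = (\<lambda>k. if 1 \<le> k \<and> k \<le> n then max 0 (u k - uhj k) else 0)"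
    define um where "um = (\<lambda>k. if 1 \<le> k \<and> k \<le> n then max 0 (uhj k - u k) else 0)"
    have eq: "(\<lambda>i. up i - um i + uhj i) = u"
    proof
      fix i show "up i - um i + uhj i = u i"
        using vecs_out[OF uv, of i] vecs_out[OF uhj, of i] by (auto simp: up_def um_def)
    qed
    have "(up, um, yd n c d C s u) \<in> F1 n c d C U uhj"
      unfolding F1_def using u eq yd_Y by (auto simp: up_def um_def vecs_def)
    hence "G1 n uhj \<rho> s up um (yd n c d C s u) \<le> \<beta>" using H by blast
    moreover have "G1 n uhj \<rho> s up um (yd n c d C s u) = fcost n c d C s u - \<rho> * pnorm_pow 1 n u uhj"
    proof -
      have "(\<Sum>k=1..n. (up k - um k + uhj k - s k) * yd n c d C s u k) = (\<Sum>k=1..n. (u k - s k) * yd n c d C s u k)"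
        by (rule sum.cong[OF refl]) (auto simp: up_def um_def)
      moreover have "(\<Sum>k=1..n. up k + um k) = (\<Sum>k=1..n. \<bar>u k - uhj k\<bar>)"
        by (rule sum.cong[OF refl]) (auto simp: up_def um_def)
      ultimately show ?thesis unfolding G1_def pnorm1 fcost_eq by simp
    qed
    ultimately show "fcost n c d C s u - \<rho> * pnorm_pow 1 n u uhj \<le> \<beta>" by simp
  qed
next
  assume H: "\<forall>u\<in>U. fcost n c d C s u - \<rho> * pnorm_pow 1 n u uhj \<le> \<beta>"
  show "\<forall>up um y. (up, um, y) \<in> F1 n c d C U uhj \<longrightarrow> G1 n uhj \<rho> s up um y \<le> \<beta>"
  proof (intro allI impI)
    fix up um y assume F: "(up, um, y) \<in> F1 n c d C U uhj"
    define u where "u = (\<lambda>i. up i - um i + uhj i)"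
    have u: "u \<in> U" and y: "y \<in> Yset n c d C" and nn: "\<forall>i\<in>{1..n}. 0 \<le> up i \<and> 0 \<le> um i"
      using F unfolding F1_def u_def by auto
    have "(\<Sum>k=1..n. \<bar>u k - uhj k\<bar>) \<le> (\<Sum>k=1..n. up k + um k)"
    proof (rule sum_mono)
      fix k assume "k \<in> {1..n}"
      then have "0 \<le> up k" "0 \<le> um k" using nn by auto
      then show "\<bar>u k - uhj k\<bar> \<le> up k + um k" by (simp add: u_def abs_le_iff)
    qed
    hence "\<rho> * (\<Sum>k=1..n. \<bar>u k - uhj k\<bar>) \<le> \<rho> * (\<Sum>k=1..n. up k + um k)"
      using \<rho> by (simp add: mult_left_mono)
    moreover have "(\<Sum>k=1..n. (up k - um k + uhj k - s k) * y k) = (\<Sum>k=1..n. (u k - s k) * y k)"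
      by (simp add: u_def)
    ultimately have "G1 n uhj \<rho> s up um y \<le> fcost n c d C s u - \<rho> * pnorm_pow 1 n u uhj"
      unfolding G1_def pnorm1 using fcost_ge[OF y, of u s] by simp
    also have "\<dots> \<le> \<beta>" using H u by blast
    finally show "G1 n uhj \<rho> s up um y \<le> \<beta>" .
  qed
qed

end



locale dro =
  fixes n :: nat and p :: real and g :: "(nat \<Rightarrow> real) \<Rightarrow> real" and U :: "(nat \<Rightarrow> real) set"
    and N :: nat and uh :: "nat \<Rightarrow> nat \<Rightarrow> real" and eps :: real
  assumes g_cont: "continuous_on UNIV g"
    and cst_cont: "\<And>v. continuous_on UNIV (\<lambda>u. pnorm_pow p n u v)"
    and cst_meas: "(\<lambda>z. pnorm_pow p n (fst z) (snd z)) \<in> borel_measurable (borel \<Otimes>\<^sub>M borel)"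
    and cst_diag: "\<And>v. pnorm_pow p n v v = 0"
    and p: "0 < p"
    and Ucomp: "compact U" and Une: "U \<noteq> {}"
    and uh: "\<forall>j\<in>{1..N}. uh j \<in> U"
    and N: "1 \<le> N" and eps: "0 < eps"
begin

abbreviation cst where "cst u v \<equiv> pnorm_pow p n u v"

definition E where "E = eps powr p"

definition phi where "phi j \<rho> = Sup ((\<lambda>u. g u - \<rho> * cst u (uh j)) ` U)"

definition h where "h \<rho> = E * \<rho> + (1 / real N) * (\<Sum>j=1..N. phi j \<rho>)"

lemma E_pos: "0 < E" unfolding E_def using eps by simp

lemma cst_nn: "0 \<le> cst u v" unfolding pnorm_pow_def by (simp add: sum_nonneg)

lemma g_meas[measurable]: "g \<in> borel_measurable borel"
  by (rule borel_measurable_continuous_onI[OF g_cont])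

lemma phi_attain:
  "\<exists>a\<in>U. phi j \<rho> = g a - \<rho> * cst a (uh j) \<and> (\<forall>u\<in>U. g u - \<rho> * cst u (uh j) \<le> phi j \<rho>)"
proof -
  have "continuous_on U (\<lambda>u. g u - \<rho> * cst u (uh j))"
    by (intro continuous_intros continuous_on_subset[OF g_cont] continuous_on_subset[OF cst_cont]) auto
  from continuous_attains_sup[OF Ucomp Une this] obtain a where a: "a \<in> U"
    and m: "\<forall>y\<in>U. g y - \<rho> * cst y (uh j) \<le> g a - \<rho> * cst a (uh j)" by blast
  have "phi j \<rho> = g a - \<rho> * cst a (uh j)"
    unfolding phi_def by (rule cSup_eq_maximum) (use a m in auto)
  with a m show ?thesis by auto
qed

lemma phi_ge: "u \<in> U \<Longrightarrow> g u - \<rho> * cst u (uh j) \<le> phi j \<rho>"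
  using phi_attain by metis

lemma K_exists: "\<exists>K\<ge>0. \<forall>j\<in>{1..N}. \<forall>u\<in>U. cst u (uh j) \<le> K"
proof -
  have "continuous_on U (\<lambda>u. \<Sum>j=1..N. cst u (uh j))"
    by (intro continuous_intros continuous_on_subset[OF cst_cont]) auto
  from continuous_attains_sup[OF Ucomp Une this] obtain a where a: "a \<in> U"
    and m: "\<forall>y\<in>U. (\<Sum>j=1..N. cst y (uh j)) \<le> (\<Sum>j=1..N. cst a (uh j))" by blast
  have "\<forall>j\<in>{1..N}. \<forall>u\<in>U. cst u (uh j) \<le> (\<Sum>j=1..N. cst a (uh j))"
  proof (intro ballI)
    fix j u assume j: "j \<in> {1..N}" and u: "u \<in> U"
    have "cst u (uh j) \<le> (\<Sum>j=1..N. cst u (uh j))"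
      by (rule member_le_sum) (use j cst_nn in auto)
    also have "\<dots> \<le> (\<Sum>j=1..N. cst a (uh j))" using m u by blast
    finally show "cst u (uh j) \<le> (\<Sum>j=1..N. cst a (uh j))" .
  qed
  moreover have "0 \<le> (\<Sum>j=1..N. cst a (uh j))" by (simp add: sum_nonneg cst_nn)
  ultimately show ?thesis by blast
qed

definition K where "K = (SOME K. K \<ge> 0 \<and> (\<forall>j\<in>{1..N}. \<forall>u\<in>U. cst u (uh j) \<le> K))"

lemma K: "0 \<le> K" "j \<in> {1..N} \<Longrightarrow> u \<in> U \<Longrightarrow> cst u (uh j) \<le> K"
  using someI_ex[OF K_exists[unfolded Ex_def[symmetric]]] unfolding K_def by blast+

lemma Gb_exists: "\<exists>B. \<forall>u\<in>U. \<bar>g u\<bar> \<le> B"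
proof -
  have "continuous_on U (\<lambda>u. \<bar>g u\<bar>)"
    by (intro continuous_intros continuous_on_subset[OF g_cont]) auto
  from continuous_attains_sup[OF Ucomp Une this] show ?thesis by blast
qed

lemma phi_lip:
  assumes j: "j \<in> {1..N}"
  shows "\<bar>phi j \<rho> - phi j \<rho>'\<bar> \<le> K * \<bar>\<rho> - \<rho>'\<bar>"
proof -
  have one: "phi j r - phi j r' \<le> K * \<bar>r - r'\<bar>" for r r'
  proof -
    obtain a where a: "a \<in> U" "phi j r = g a - r * cst a (uh j)" using phi_attain by blast
    have "phi j r = (g a - r' * cst a (uh j)) + (r' - r) * cst a (uh j)" using a by (simp add: algebra_simps)
    also have "\<dots> \<le> phi j r' + \<bar>r - r'\<bar> * K"
    proof -
      have "(r' - r) * cst a (uh j) \<le> \<bar>r' - r\<bar> * cst a (uh j)"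
        using cst_nn[of a "uh j"] by (simp add: mult_right_mono)
      also have "\<dots> \<le> \<bar>r - r'\<bar> * K" using K(2)[OF j a(1)] by (simp add: abs_minus_commute mult_left_mono)
      finally show ?thesis using phi_ge[OF a(1), of r' j] by linarith
    qed
    finally show ?thesis by (simp add: algebra_simps)
  qed
  from one[of \<rho> \<rho>'] one[of \<rho>' \<rho>] show ?thesis by (simp add: abs_minus_commute abs_le_iff)
qed

lemma h_cont: "continuous_on S h"
proof -
  have "continuous_on S (phi j)" if j: "j \<in> {1..N}" for j
  proof (rule continuous_on_subset[of UNIV], rule lipschitz_on_continuous_on)
    show "K-lipschitz_on UNIV (phi j)"
      by (rule lipschitz_onI) (use phi_lip[OF j] K(1) in \<open>auto simp: dist_real_def\<close>)
  qed auto
  then show ?thesis unfolding h_def by (intro continuous_intros) auto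
qed

lemma h_lower: "E * \<rho> + (1 / real N) * (\<Sum>j=1..N. g (uh j)) \<le> h \<rho>"
proof -
  have "(\<Sum>j=1..N. g (uh j)) \<le> (\<Sum>j=1..N. phi j \<rho>)"
  proof (rule sum_mono)
    fix j assume j: "j \<in> {1..N}"
    show "g (uh j) \<le> phi j \<rho>" using phi_ge[of "uh j" \<rho> j] uh j cst_diag by auto
  qed
  then show ?thesis unfolding h_def using N by (simp add: divide_right_mono)
qed

lemma h_min: "\<exists>r\<ge>0. \<forall>\<rho>\<ge>0. h r \<le> h \<rho>"
proof -
  define A where "A = (1 / real N) * (\<Sum>j=1..N. g (uh j))"
  define R where "R = (h 0 - A) / E"
  have R0: "0 \<le> R" using h_lower[of 0] E_pos unfolding R_def A_def by simp
  obtain r where r: "r \<in> {0..R}" and m: "\<forall>y\<in>{0..R}. h r \<le> h y"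
    using continuous_attains_inf[OF compact_Icc _ h_cont, of 0 R] R0 by auto
  have "h r \<le> h \<rho>" if "0 \<le> \<rho>" for \<rho>
  proof (cases "\<rho> \<le> R")
    case True then show ?thesis using m that by auto
  next
    case False
    have "h r \<le> h 0" using m R0 by auto
    also have "h 0 = E * R + A" unfolding R_def using E_pos by simp
    also have "\<dots> \<le> E * \<rho> + A" using False E_pos by simp
    also have "\<dots> \<le> h \<rho>" using h_lower unfolding A_def by simp
    finally show ?thesis .
  qed
  then show ?thesis using r by auto
qed

lemma h_subgrad:
  assumes a: "\<forall>j\<in>{1..N}. a j \<in> U \<and> phi j \<rho>0 = g (a j) - \<rho>0 * cst (a j) (uh j)"
  shows "h \<rho> \<ge> h \<rho>0 + (\<rho> - \<rho>0) * (E - (1 / real N) * (\<Sum>j=1..N. cst (a j) (uh j)))"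
proof -
  have "(\<Sum>j=1..N. phi j \<rho>) \<ge> (\<Sum>j=1..N. phi j \<rho>0 - (\<rho> - \<rho>0) * cst (a j) (uh j))"
  proof (rule sum_mono)
    fix j assume j: "j \<in> {1..N}"
    have "g (a j) - \<rho> * cst (a j) (uh j) \<le> phi j \<rho>" using phi_ge a j by blast
    then show "phi j \<rho>0 - (\<rho> - \<rho>0) * cst (a j) (uh j) \<le> phi j \<rho>" using a j by (simp add: algebra_simps)
  qed
  then have "(\<Sum>j=1..N. phi j \<rho>) \<ge> (\<Sum>j=1..N. phi j \<rho>0) - (\<rho> - \<rho>0) * (\<Sum>j=1..N. cst (a j) (uh j))"
    by (simp add: sum_subtractf sum_distrib_left)
  then have "(1 / real N) * (\<Sum>j=1..N. phi j \<rho>) \<ge> (1 / real N) * ((\<Sum>j=1..N. phi j \<rho>0) - (\<rho> - \<rho>0) * (\<Sum>j=1..N. cst (a j) (uh j)))"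
    using N by (intro mult_left_mono) auto
  then show ?thesis unfolding h_def by (simp add: algebra_simps diff_divide_distrib)
qed

end



lemma distr_map_pmf:
  assumes "space M = UNIV"
  shows "distr (measure_pmf (map_pmf f q)) M h = distr (measure_pmf q) M (\<lambda>x. h (f x))"
proof -
  have "distr (measure_pmf (map_pmf f q)) M h = distr (distr (measure_pmf q) (count_space UNIV) f) M h"
    by (simp add: map_pmf_rep_eq)
  also have "\<dots> = distr (measure_pmf q) M (h \<circ> f)"
    by (rule distr_distr) (auto simp: assms)
  finally show ?thesis by (simp add: comp_def)
qed

lemma distr_pmf_twice:
  assumes "space M = UNIV" "g \<in> measurable M L"
  shows "distr (distr (measure_pmf q) M (\<lambda>x. x)) L g = distr (measure_pmf q) L g"
  using distr_distr[OF assms(2), of "\<lambda>x. x" "measure_pmf q"] assms(1) by (simp add: comp_def)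

lemma int_pair_pmf:
  fixes f :: "nat \<times> bool \<Rightarrow> real"
  assumes N: "1 \<le> N" and l: "0 \<le> l" "l \<le> 1"
  shows "integral\<^sup>L (measure_pmf (pair_pmf (pmf_of_set {1..N}) (bernoulli_pmf l))) f =
    (1 / real N) * (\<Sum>j=1..N. l * f (j, True) + (1 - l) * f (j, False))"
proof -
  have ne: "{1..N} \<noteq> {}" using N by auto
  have "integral\<^sup>L (measure_pmf (pair_pmf (pmf_of_set {1..N}) (bernoulli_pmf l))) f =
      (\<Sum>a\<in>{1..N} \<times> UNIV. f a * pmf (pair_pmf (pmf_of_set {1..N}) (bernoulli_pmf l)) a)"
    by (rule integral_measure_pmf_real) (use ne in auto)
  also have "\<dots> = (\<Sum>j\<in>{1..N}. \<Sum>b\<in>UNIV. f (j, b) * pmf (pair_pmf (pmf_of_set {1..N}) (bernoulli_pmf l)) (j, b))"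
    by (subst sum.cartesian_product) (simp add: case_prod_beta)
  also have "\<dots> = (\<Sum>j\<in>{1..N}. \<Sum>b\<in>UNIV. f (j, b) * (pmf (pmf_of_set {1..N}) j * pmf (bernoulli_pmf l) b))"
    by (simp only: pmf_pair)
  also have "\<dots> = (\<Sum>j\<in>{1..N}. (1 / real N) * (l * f (j, True) + (1 - l) * f (j, False)))"
  proof (rule sum.cong[OF refl])
    fix j assume j: "j \<in> {1..N}"
    have "pmf (pmf_of_set {1..N}) j = 1 / real N" using j ne by simp
    then show "(\<Sum>b\<in>UNIV. f (j, b) * (pmf (pmf_of_set {1..N}) j * pmf (bernoulli_pmf l) b)) =
        (1 / real N) * (l * f (j, True) + (1 - l) * f (j, False))"
      using l by (simp add: UNIV_bool algebra_simps add_divide_distrib[symmetric])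
  qed
  also have "\<dots> = (1 / real N) * (\<Sum>j=1..N. l * f (j, True) + (1 - l) * f (j, False))"
    by (simp add: sum_distrib_left)
  finally show ?thesis .
qed

lemma mix_sum: "(1 / real N) * (\<Sum>j=1..N. l * A j + (1 - l) * B j) =
   l * ((1 / real N) * (\<Sum>j=1..N. A j)) + (1 - l) * ((1 / real N) * (\<Sum>j=1..N. B j))"
proof -
  have "(\<Sum>j=1..N. l * A j + (1 - l) * B j) = l * (\<Sum>j=1..N. A j) + (1 - l) * (\<Sum>j=1..N. B j)"
    by (simp add: sum.distrib sum_distrib_left)
  then show ?thesis unfolding \<open>(\<Sum>j=1..N. l * A j + (1 - l) * B j) = _\<close> by (simp add: algebra_simps diff_divide_distrib add_divide_distrib)
qed

context dro
begin

lemma U_borel[measurable]: "U \<in> sets borel"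
  using Ucomp by (simp add: compact_imp_closed)

lemma construct:
  assumes ab: "\<forall>j\<in>{1..N}. a j \<in> U \<and> b j \<in> U" and l: "0 \<le> l" "l \<le> 1"
    and cost: "l * ((1 / real N) * (\<Sum>j=1..N. cst (a j) (uh j))) + (1 - l) * ((1 / real N) * (\<Sum>j=1..N. cst (b j) (uh j))) \<le> E"
  shows "\<exists>Q\<in>ambiguity p n U N uh eps. (\<integral>u. g u \<partial>Q) =
     l * ((1 / real N) * (\<Sum>j=1..N. g (a j))) + (1 - l) * ((1 / real N) * (\<Sum>j=1..N. g (b j)))"
proof -
  define P0 where "P0 = pair_pmf (pmf_of_set {1..N}) (bernoulli_pmf l)"
  define pt where "pt = (\<lambda>k::nat\<times>bool. if snd k then a (fst k) else b (fst k))"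
  define Q where "Q = distr (measure_pmf (map_pmf pt P0)) borel (\<lambda>x. x)"
  define Pi where "Pi = distr (measure_pmf (map_pmf (\<lambda>k. (pt k, uh (fst k))) P0)) (borel \<Otimes>\<^sub>M borel) (\<lambda>x. x)"
  have ne: "{1..N} \<noteq> {}" using N by auto
  have setP0: "set_pmf P0 \<subseteq> {1..N} \<times> UNIV"
    unfolding P0_def set_pair_pmf using ne by auto
  have ptU: "k \<in> set_pmf P0 \<Longrightarrow> pt k \<in> U" for k
    using ab setP0 unfolding pt_def by (cases k) auto
  have spb: "space (borel \<Otimes>\<^sub>M borel) = UNIV" by (simp add: space_pair_measure)
  have Qe: "Q = distr (measure_pmf P0) borel pt"
    unfolding Q_def by (subst distr_map_pmf) auto
  have Pi_fst: "distr Pi borel fst = Q"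
    unfolding Pi_def Qe by (subst distr_pmf_twice) (auto simp: spb distr_map_pmf)
  have Pi_snd: "distr Pi borel snd = empirical N uh"
  proof -
    have "distr Pi borel snd = distr (measure_pmf P0) borel (\<lambda>k. uh (fst k))"
      unfolding Pi_def by (subst distr_pmf_twice) (auto simp: spb distr_map_pmf)
    also have "\<dots> = distr (measure_pmf (map_pmf fst P0)) borel uh"
      by (subst distr_map_pmf) auto
    also have "\<dots> = empirical N uh"
      unfolding empirical_def P0_def map_fst_pair_pmf by (subst distr_map_pmf) auto
    finally show ?thesis .
  qed
  have probQ: "prob_space Q" unfolding Q_def
    by (rule prob_space.prob_space_distr) (auto simp: prob_space_measure_pmf)
  have QU: "emeasure Q U = 1"
  proof -
    have "emeasure Q U = emeasure (measure_pmf (map_pmf pt P0)) U"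
      unfolding Q_def by (subst emeasure_distr) auto
    also have "\<dots> = 1"
      by (rule measure_pmf.emeasure_eq_1_AE) (auto simp: AE_measure_pmf_iff ptU)
    finally show ?thesis .
  qed
  have distQ: "distr_on U Q" unfolding distr_on_def using probQ QU by (simp add: Q_def)
  have PiC: "Pi \<in> couplings Q (empirical N uh)"
    unfolding couplings_def using Pi_fst Pi_snd
    by (auto simp: Pi_def spb intro!: prob_space.prob_space_distr prob_space_measure_pmf)
  have costPi: "(\<integral>z. cst (fst z) (snd z) \<partial>Pi) =
     l * ((1 / real N) * (\<Sum>j=1..N. cst (a j) (uh j))) + (1 - l) * ((1 / real N) * (\<Sum>j=1..N. cst (b j) (uh j)))"
  proof -
    have "(\<integral>z. cst (fst z) (snd z) \<partial>Pi) = (\<integral>k. cst (pt k) (uh (fst k)) \<partial>measure_pmf P0)"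
      unfolding Pi_def by (subst integral_distr) (auto simp: spb cst_meas)
    also have "\<dots> = (1 / real N) * (\<Sum>j=1..N. l * cst (a j) (uh j) + (1 - l) * cst (b j) (uh j))"
      unfolding P0_def by (subst int_pair_pmf[OF N l]) (simp add: pt_def)
    also have "\<dots> = l * ((1 / real N) * (\<Sum>j=1..N. cst (a j) (uh j))) + (1 - l) * ((1 / real N) * (\<Sum>j=1..N. cst (b j) (uh j)))"
      by (rule mix_sum)
    finally show ?thesis .
  qed
  have wd: "wdist p n Q (empirical N uh) \<le> eps"
  proof -
    let ?X = "INF P \<in> couplings Q (empirical N uh). (\<integral>z. pnorm_pow p n (fst z) (snd z) \<partial>P)"
    have bdd: "bdd_below ((\<lambda>P. \<integral>z. pnorm_pow p n (fst z) (snd z) \<partial>P) ` couplings Q (empirical N uh))"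
      by (rule bdd_belowI[of _ 0]) (auto intro!: integral_nonneg_AE simp: cst_nn)
    have X1: "?X \<le> E"
      using cINF_lower[OF bdd PiC] costPi cost by simp
    have X0: "0 \<le> ?X"
      using PiC by (intro cINF_greatest) (auto intro!: integral_nonneg_AE simp: cst_nn)
    have "?X powr (1 / p) \<le> E powr (1 / p)"
      by (rule powr_mono2) (use X0 X1 p in auto)
    also have "E powr (1 / p) = eps"
      unfolding E_def powr_powr using p eps by simp
    finally show ?thesis unfolding wdist_def .
  qed
  have intg: "(\<integral>u. g u \<partial>Q) = l * ((1 / real N) * (\<Sum>j=1..N. g (a j))) + (1 - l) * ((1 / real N) * (\<Sum>j=1..N. g (b j)))"
  proof -
    have "(\<integral>u. g u \<partial>Q) = (\<integral>k. g (pt k) \<partial>measure_pmf P0)"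
      unfolding Qe by (subst integral_distr) auto
    also have "\<dots> = (1 / real N) * (\<Sum>j=1..N. l * g (a j) + (1 - l) * g (b j))"
      unfolding P0_def by (subst int_pair_pmf[OF N l]) (simp add: pt_def)
    also have "\<dots> = l * ((1 / real N) * (\<Sum>j=1..N. g (a j))) + (1 - l) * ((1 / real N) * (\<Sum>j=1..N. g (b j)))"
      by (rule mix_sum)
    finally show ?thesis .
  qed
  show ?thesis
    using distQ wd intg unfolding ambiguity_def by blast
qed

end



context dro
begin

definition phiv where "phiv \<rho> w = Sup ((\<lambda>u. g u - \<rho> * cst u w) ` U)"

lemma phi_phiv: "phi j \<rho> = phiv \<rho> (uh j)"
  unfolding phi_def phiv_def ..

definition Psi where "Psi \<rho> v = (\<Sum>w\<in>uh ` {1..N}. indicator {w} v * phiv \<rho> w)"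

lemma Psi_meas[measurable]: "Psi \<rho> \<in> borel_measurable borel"
  unfolding Psi_def by measurable

lemma Psi_at: "v \<in> uh ` {1..N} \<Longrightarrow> Psi \<rho> v = phiv \<rho> v"
proof -
  assume v: "v \<in> uh ` {1..N}"
  have "Psi \<rho> v = (\<Sum>w\<in>uh ` {1..N}. if w = v then phiv \<rho> w else 0)"
    unfolding Psi_def by (rule sum.cong) (auto simp: indicator_def)
  also have "\<dots> = phiv \<rho> v" using v by (simp add: sum.delta)
  finally show ?thesis .
qed

lemma emp_prob: "prob_space (empirical N uh)"
  unfolding empirical_def by (rule prob_space.prob_space_distr) (auto simp: prob_space_measure_pmf)

lemma emp_sets: "sets (empirical N uh) = sets borel"
  unfolding empirical_def by simp

lemma emp_AE: "AE v in empirical N uh. v \<in> uh ` {1..N}"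
proof -
  have ne: "{1..N} \<noteq> {}" using N by auto
  have fin: "uh ` {1..N} \<in> sets borel" by (intro borel_closed finite_imp_closed) auto
  show ?thesis unfolding empirical_def
    by (subst AE_distr_iff) (use fin ne in \<open>auto simp: AE_measure_pmf_iff\<close>)
qed

lemma emp_int: "(\<integral>v. Psi \<rho> v \<partial>empirical N uh) = (1 / real N) * (\<Sum>j=1..N. phi j \<rho>)"
proof -
  have ne: "{1..N} \<noteq> {}" using N by auto
  have "(\<integral>v. Psi \<rho> v \<partial>empirical N uh) = (\<integral>v. Psi \<rho> v \<partial>measure_pmf (map_pmf uh (pmf_of_set {1..N})))"
    unfolding empirical_def by (subst integral_distr) auto
  also have "\<dots> = (\<Sum>j=1..N. Psi \<rho> (uh j)) / real N"
    using ne by (simp add: integral_pmf_of_set)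
  also have "\<dots> = (1 / real N) * (\<Sum>j=1..N. phi j \<rho>)"
    by (simp add: Psi_at phi_phiv)
  finally show ?thesis .
qed

lemma couplings_ne:
  assumes pQ: "prob_space Q" and sQ: "sets Q = sets borel"
  shows "Q \<Otimes>\<^sub>M empirical N uh \<in> couplings Q (empirical N uh)"
proof -
  interpret Q: prob_space Q by (rule pQ)
  interpret M: prob_space "empirical N uh" by (rule emp_prob)
  interpret P: pair_prob_space Q "empirical N uh" by unfold_locales
  have "distr (Q \<Otimes>\<^sub>M empirical N uh) borel fst = distr (Q \<Otimes>\<^sub>M empirical N uh) Q fst"
    by (rule distr_cong) (auto simp: sQ)
  also have "\<dots> = Q" by (rule M.distr_pair_fst)
  finally have f: "distr (Q \<Otimes>\<^sub>M empirical N uh) borel fst = Q" .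
  have "distr (Q \<Otimes>\<^sub>M empirical N uh) borel snd = distr (Q \<Otimes>\<^sub>M empirical N uh) (empirical N uh) snd"
    by (rule distr_cong) (auto simp: emp_sets)
  also have "\<dots> = distr (distr (empirical N uh \<Otimes>\<^sub>M Q) (Q \<Otimes>\<^sub>M empirical N uh) (\<lambda>(x, y). (y, x))) (empirical N uh) snd"
    by (subst P.distr_pair_swap[symmetric]) rule
  also have "\<dots> = distr (empirical N uh \<Otimes>\<^sub>M Q) (empirical N uh) ((\<lambda>z. snd z) \<circ> (\<lambda>(x, y). (y, x)))"
    by (rule distr_distr) auto
  also have "\<dots> = distr (empirical N uh \<Otimes>\<^sub>M Q) (empirical N uh) fst"
    by (rule distr_cong) auto
  also have "\<dots> = empirical N uh" by (rule Q.distr_pair_fst)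
  finally have s: "distr (Q \<Otimes>\<^sub>M empirical N uh) borel snd = empirical N uh" .
  show ?thesis unfolding couplings_def using f s P.prob_space_axioms
    by (auto simp: sQ emp_sets intro!: sets_pair_measure_cong)
qed

lemma weak_one:
  assumes \<rho>: "0 \<le> \<rho>" and pQ: "prob_space Q" and sQ: "sets Q = sets borel" and QU: "emeasure Q U = 1"
    and PP: "PP \<in> couplings Q (empirical N uh)"
  shows "(\<integral>u. g u \<partial>Q) \<le> \<rho> * (\<integral>z. cst (fst z) (snd z) \<partial>PP) + (1 / real N) * (\<Sum>j=1..N. phi j \<rho>)"
proof -
  have pPi: "prob_space PP" and sPi: "sets PP = sets (borel \<Otimes>\<^sub>M borel)"
    and fPi: "distr PP borel fst = Q" and snPi: "distr PP borel snd = empirical N uh"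
    using PP unfolding couplings_def by auto
  interpret PP: prob_space PP by (rule pPi)
  have mfst: "fst \<in> measurable PP borel" by (simp add: measurable_cong_sets[OF sPi refl])
  have msnd: "snd \<in> measurable PP borel" by (simp add: measurable_cong_sets[OF sPi refl])
  have mcst: "(\<lambda>z. cst (fst z) (snd z)) \<in> borel_measurable PP"
    using cst_meas by (simp add: measurable_cong_sets[OF sPi refl])
  have mgf: "(\<lambda>z. g (fst z)) \<in> borel_measurable PP" using mfst by measurable
  have mPs: "(\<lambda>z. Psi \<rho> (snd z)) \<in> borel_measurable PP" using msnd by measurable
  have AEQ: "AE u in Q. u \<in> U"
  proof -
    interpret Q: prob_space Q by (rule pQ)
    have "Q.prob U = 1" using QU by (simp add: Q.emeasure_eq_measure)
    then show ?thesis by (subst Q.AE_in_set_eq_1) (auto simp: sQ)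
  qed
  have AE1: "AE z in PP. fst z \<in> U"
    using AEQ unfolding fPi[symmetric] by (rule AE_distrD[OF mfst])
  have AE2: "AE z in PP. snd z \<in> uh ` {1..N}"
    using emp_AE unfolding snPi[symmetric] by (rule AE_distrD[OF msnd])
  obtain B where B: "\<forall>u\<in>U. \<bar>g u\<bar> \<le> B" using Gb_exists by blast
  have int_g: "integrable PP (\<lambda>z. g (fst z))"
    by (rule PP.integrable_const_bound[where B=B]) (use AE1 B mgf in auto)
  have int_c: "integrable PP (\<lambda>z. cst (fst z) (snd z))"
  proof (rule PP.integrable_const_bound[where B=K])
    show "AE z in PP. norm (cst (fst z) (snd z)) \<le> K"
      using AE1 AE2 by eventually_elim (use K(2) cst_nn in \<open>auto simp: abs_of_nonneg\<close>)
  qed (rule mcst)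
  have int_P: "integrable PP (\<lambda>z. Psi \<rho> (snd z))"
  proof (rule PP.integrable_const_bound[where B="\<Sum>w\<in>uh ` {1..N}. \<bar>phiv \<rho> w\<bar>"])
    show "AE z in PP. norm (Psi \<rho> (snd z)) \<le> (\<Sum>w\<in>uh ` {1..N}. \<bar>phiv \<rho> w\<bar>)"
    proof (rule AE_I2)
      fix z
      have "\<bar>Psi \<rho> (snd z)\<bar> \<le> (\<Sum>w\<in>uh ` {1..N}. \<bar>indicator {w} (snd z) * phiv \<rho> w\<bar>)"
        unfolding Psi_def by (rule sum_abs)
      also have "\<dots> \<le> (\<Sum>w\<in>uh ` {1..N}. \<bar>phiv \<rho> w\<bar>)"
        by (rule sum_mono) (auto simp: indicator_def)
      finally show "norm (Psi \<rho> (snd z)) \<le> (\<Sum>w\<in>uh ` {1..N}. \<bar>phiv \<rho> w\<bar>)" by simp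
    qed
  qed (rule mPs)
  have "(\<integral>u. g u \<partial>Q) = (\<integral>z. g (fst z) \<partial>PP)"
    unfolding fPi[symmetric] by (rule integral_distr[OF mfst g_meas])
  also have "\<dots> \<le> (\<integral>z. \<rho> * cst (fst z) (snd z) + Psi \<rho> (snd z) \<partial>PP)"
  proof (rule integral_mono_AE[OF int_g])
    show "integrable PP (\<lambda>z. \<rho> * cst (fst z) (snd z) + Psi \<rho> (snd z))"
      using int_c int_P by auto
    show "AE z in PP. g (fst z) \<le> \<rho> * cst (fst z) (snd z) + Psi \<rho> (snd z)"
      using AE1 AE2
    proof eventually_elim
      case (elim z)
      then obtain j where j: "j \<in> {1..N}" "snd z = uh j" by auto
      have "g (fst z) - \<rho> * cst (fst z) (uh j) \<le> phi j \<rho>" by (rule phi_ge) (use elim in auto)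
      moreover have "Psi \<rho> (snd z) = phi j \<rho>" using Psi_at[OF elim(2)] j by (simp add: phi_phiv)
      ultimately show ?case using j by simp
    qed
  qed
  also have "\<dots> = \<rho> * (\<integral>z. cst (fst z) (snd z) \<partial>PP) + (\<integral>z. Psi \<rho> (snd z) \<partial>PP)"
    using int_c int_P by simp
  also have "(\<integral>z. Psi \<rho> (snd z) \<partial>PP) = (\<integral>v. Psi \<rho> v \<partial>empirical N uh)"
    unfolding snPi[symmetric] by (rule integral_distr[OF msnd Psi_meas, symmetric])
  also have "\<dots> = (1 / real N) * (\<Sum>j=1..N. phi j \<rho>)" by (rule emp_int)
  finally show ?thesis .
qed

lemma weak:
  assumes Q: "Q \<in> ambiguity p n U N uh eps" and \<rho>: "0 \<le> \<rho>"
  shows "(\<integral>u. g u \<partial>Q) \<le> h \<rho>"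
proof -
  have pQ: "prob_space Q" and sQ: "sets Q = sets borel" and QU: "emeasure Q U = 1"
    and wd: "wdist p n Q (empirical N uh) \<le> eps"
    using Q unfolding ambiguity_def distr_on_def by auto
  let ?C = "couplings Q (empirical N uh)"
  let ?f = "\<lambda>P. \<integral>z. cst (fst z) (snd z) \<partial>P"
  let ?X = "INF P \<in> ?C. ?f P"
  have Cne: "?C \<noteq> {}" using couplings_ne[OF pQ sQ] by auto
  have bdd: "bdd_below (?f ` ?C)"
    by (rule bdd_belowI[of _ 0]) (auto intro!: integral_nonneg_AE simp: cst_nn)
  have X0: "0 \<le> ?X"
    using Cne by (intro cINF_greatest) (auto intro!: integral_nonneg_AE simp: cst_nn)
  have XE: "?X \<le> E"
  proof -
    have "?X = (?X powr (1 / p)) powr p" using X0 p by (simp add: powr_powr)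
    also have "\<dots> \<le> eps powr p"
      by (rule powr_mono2) (use p wd in \<open>auto simp: wdist_def\<close>)
    finally show ?thesis unfolding E_def .
  qed
  have "(\<integral>u. g u \<partial>Q) \<le> h \<rho> + \<rho> * \<delta>" if \<delta>: "0 < \<delta>" for \<delta>
  proof -
    have "?X < E + \<delta>" using XE \<delta> by simp
    then obtain P where P: "P \<in> ?C" and Pl: "?f P < E + \<delta>"
      using cINF_less_iff[OF Cne bdd] by blast
    have "(\<integral>u. g u \<partial>Q) \<le> \<rho> * ?f P + (1 / real N) * (\<Sum>j=1..N. phi j \<rho>)"
      by (rule weak_one[OF \<rho> pQ sQ QU P])
    also have "\<dots> \<le> \<rho> * (E + \<delta>) + (1 / real N) * (\<Sum>j=1..N. phi j \<rho>)"
      using Pl \<rho> by (simp add: mult_left_mono)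
    also have "\<dots> = h \<rho> + \<rho> * \<delta>" unfolding h_def by (simp add: algebra_simps)
    finally show ?thesis .
  qed
  then show ?thesis
  proof -
    assume H: "\<And>\<delta>. 0 < \<delta> \<Longrightarrow> (\<integral>u. g u \<partial>Q) \<le> h \<rho> + \<rho> * \<delta>"
    show ?thesis
    proof (rule field_le_epsilon)
      fix e :: real assume e: "0 < e"
      have "(\<integral>u. g u \<partial>Q) \<le> h \<rho> + \<rho> * (e / (\<rho> + 1))" using H[of "e / (\<rho> + 1)"] e \<rho> by simp
      also have "\<rho> * (e / (\<rho> + 1)) \<le> e" using e \<rho> by (simp add: field_simps)
      finally show "(\<integral>u. g u \<partial>Q) \<le> h \<rho> + e" by simp
    qed
  qed
qed

end



context dro
begin

lemma maximizers: "\<exists>a. \<forall>j\<in>{1..N}. a j \<in> U \<and> phi j \<rho> = g (a j) - \<rho> * cst (a j) (uh j)"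
proof -
  have "\<forall>j\<in>{1..N}. \<exists>a. a \<in> U \<and> phi j \<rho> = g a - \<rho> * cst a (uh j)"
    using phi_attain by blast
  then show ?thesis by (rule bchoice)
qed

definition Cb where "Cb a = (1 / real N) * (\<Sum>j=1..N. cst (a j) (uh j))"

lemma Cb_nn: "0 \<le> Cb a" unfolding Cb_def by (simp add: sum_nonneg cst_nn)

lemma value_eq:
  assumes a: "\<forall>j\<in>{1..N}. a j \<in> U \<and> phi j \<rho>0 = g (a j) - \<rho>0 * cst (a j) (uh j)"
  shows "(1 / real N) * (\<Sum>j=1..N. g (a j)) = h \<rho>0 - E * \<rho>0 + \<rho>0 * Cb a"
proof -
  have "(\<Sum>j=1..N. g (a j)) = (\<Sum>j=1..N. phi j \<rho>0 + \<rho>0 * cst (a j) (uh j))"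
    by (rule sum.cong) (use a in auto)
  also have "\<dots> = (\<Sum>j=1..N. phi j \<rho>0) + \<rho>0 * (\<Sum>j=1..N. cst (a j) (uh j))"
    by (simp add: sum.distrib sum_distrib_left)
  finally show ?thesis unfolding h_def Cb_def by (simp add: algebra_simps)
qed

lemma subgrad_Cb:
  assumes a: "\<forall>j\<in>{1..N}. a j \<in> U \<and> phi j \<rho>0 = g (a j) - \<rho>0 * cst (a j) (uh j)"
  shows "h \<rho> \<ge> h \<rho>0 + (\<rho> - \<rho>0) * (E - Cb a)"
  using h_subgrad[OF a] unfolding Cb_def .

lemma near_opt:
  assumes r: "0 \<le> r" and min: "\<forall>\<rho>\<ge>0. h r \<le> h \<rho>" and \<delta>: "0 < \<delta>" and \<delta>r: "0 < r \<Longrightarrow> \<delta> \<le> r"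
  shows "\<exists>Q\<in>ambiguity p n U N uh eps. h r - 2 * \<delta> * E \<le> (\<integral>u. g u \<partial>Q)"
proof -
  define rp where "rp = r + \<delta>"
  obtain a where a: "\<forall>j\<in>{1..N}. a j \<in> U \<and> phi j rp = g (a j) - rp * cst (a j) (uh j)"
    using maximizers by blast
  have hrp: "h r \<le> h rp" using min r \<delta> unfolding rp_def by auto
  have CpE: "Cb a \<le> E"
  proof -
    have "h r \<ge> h rp + (r - rp) * (E - Cb a)" by (rule subgrad_Cb[OF a])
    then have "\<delta> * (E - Cb a) \<ge> 0" using hrp unfolding rp_def by (simp add: algebra_simps)
    then show ?thesis using \<delta> by (simp add: zero_le_mult_iff)
  qed
  have Vp: "(1 / real N) * (\<Sum>j=1..N. g (a j)) = h rp - E * rp + rp * Cb a" by (rule value_eq[OF a])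
  have aU: "\<forall>j\<in>{1..N}. a j \<in> U \<and> a j \<in> U" using a by auto
  show ?thesis
  proof (cases "r = 0")
    case True
    have cost: "1 * ((1 / real N) * (\<Sum>j=1..N. cst (a j) (uh j))) + (1 - 1) * ((1 / real N) * (\<Sum>j=1..N. cst (a j) (uh j))) \<le> E"
      using CpE unfolding Cb_def by simp
    obtain Q where Q: "Q \<in> ambiguity p n U N uh eps"
      and iQ: "(\<integral>u. g u \<partial>Q) = 1 * ((1 / real N) * (\<Sum>j=1..N. g (a j))) + (1 - 1) * ((1 / real N) * (\<Sum>j=1..N. g (a j)))"
      using construct[OF aU _ _ cost] by auto
    have "h r - 2 * \<delta> * E \<le> h rp - E * rp + rp * Cb a"
    proof -
      have "0 \<le> \<delta> * E" "0 \<le> \<delta> * Cb a" using Cb_nn[of a] E_pos \<delta> by auto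
      then show ?thesis using hrp True unfolding rp_def by (simp add: algebra_simps)
    qed
    then have "h r - 2 * \<delta> * E \<le> (\<integral>u. g u \<partial>Q)" using iQ Vp by simp
    then show ?thesis using Q by blast
  next
    case False
    then have r0: "0 < r" using r by simp
    define rm where "rm = r - \<delta>"
    have rm0: "0 \<le> rm" using \<delta>r[OF r0] unfolding rm_def by simp
    obtain b where b: "\<forall>j\<in>{1..N}. b j \<in> U \<and> phi j rm = g (b j) - rm * cst (b j) (uh j)"
      using maximizers by blast
    have hrm: "h r \<le> h rm" using min rm0 by auto
    have CmE: "E \<le> Cb b"
    proof -
      have "h r \<ge> h rm + (r - rm) * (E - Cb b)" by (rule subgrad_Cb[OF b])
      then have "\<delta> * (E - Cb b) \<le> 0" using hrm unfolding rm_def by (simp add: algebra_simps)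
      then show ?thesis using \<delta> by (simp add: mult_le_0_iff)
    qed
    have Vm: "(1 / real N) * (\<Sum>j=1..N. g (b j)) = h rm - E * rm + rm * Cb b" by (rule value_eq[OF b])
    define l where "l = (if Cb b = Cb a then 1 else (Cb b - E) / (Cb b - Cb a))"
    have l01: "0 \<le> l" "l \<le> 1" and bal: "l * (Cb a - E) + (1 - l) * (Cb b - E) = 0"
    proof -
      show "0 \<le> l" "l \<le> 1" using CpE CmE unfolding l_def by (auto simp: field_simps)
      show "l * (Cb a - E) + (1 - l) * (Cb b - E) = 0"
      proof (cases "Cb b = Cb a")
        case True then show ?thesis using CpE CmE unfolding l_def by simp
      next
        case False
        then have "Cb b - Cb a \<noteq> 0" by simp
        then show ?thesis unfolding l_def using False by (simp add: field_simps)
      qed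
    qed
    have ab: "\<forall>j\<in>{1..N}. a j \<in> U \<and> b j \<in> U" using a b by auto
    have cost: "l * ((1 / real N) * (\<Sum>j=1..N. cst (a j) (uh j))) + (1 - l) * ((1 / real N) * (\<Sum>j=1..N. cst (b j) (uh j))) \<le> E"
      using bal unfolding Cb_def by (simp add: algebra_simps)
    obtain Q where Q: "Q \<in> ambiguity p n U N uh eps"
      and iQ: "(\<integral>u. g u \<partial>Q) = l * ((1 / real N) * (\<Sum>j=1..N. g (a j))) + (1 - l) * ((1 / real N) * (\<Sum>j=1..N. g (b j)))"
      using construct[OF ab l01 cost] by auto
    have "(\<integral>u. g u \<partial>Q) = l * (h rp - E * rp + rp * Cb a) + (1 - l) * (h rm - E * rm + rm * Cb b)"
      unfolding iQ Vp[symmetric] Vm[symmetric] ..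
    also have "\<dots> \<ge> l * (h r + rp * (Cb a - E)) + (1 - l) * (h r + rm * (Cb b - E))"
    proof -
      have "l * (h r + rp * (Cb a - E)) \<le> l * (h rp - E * rp + rp * Cb a)"
        using hrp l01 by (intro mult_left_mono) (auto simp: algebra_simps)
      moreover have "(1 - l) * (h r + rm * (Cb b - E)) \<le> (1 - l) * (h rm - E * rm + rm * Cb b)"
        using hrm l01 by (intro mult_left_mono) (auto simp: algebra_simps)
      ultimately show ?thesis by linarith
    qed
    also have "l * (h r + rp * (Cb a - E)) + (1 - l) * (h r + rm * (Cb b - E)) =
        h r + r * (l * (Cb a - E) + (1 - l) * (Cb b - E)) + \<delta> * (2 * l * (Cb a - E) - (l * (Cb a - E) + (1 - l) * (Cb b - E)))"
      unfolding rp_def rm_def by (simp add: algebra_simps)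
    also have "\<dots> = h r + 2 * \<delta> * (l * (Cb a - E))" using bal by simp
    finally have v: "h r + 2 * \<delta> * (l * (Cb a - E)) \<le> (\<integral>u. g u \<partial>Q)" .
    have "l * (Cb a - E) \<ge> - E"
    proof -
      have "l * (Cb a - E) \<ge> l * (- E)" using Cb_nn[of a] l01 by (intro mult_left_mono) auto
      also have "l * (- E) \<ge> - E" using l01 E_pos by (simp add: mult_le_cancel_right1)
      finally show ?thesis .
    qed
    then have "\<delta> * (- E) \<le> \<delta> * (l * (Cb a - E))" using \<delta> by (intro mult_left_mono) auto
    then have "h r - 2 * \<delta> * E \<le> h r + 2 * \<delta> * (l * (Cb a - E))" by simp
    then have "h r - 2 * \<delta> * E \<le> (\<integral>u. g u \<partial>Q)" using v by linarith
    then show ?thesis using Q by blast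
  qed
qed

lemma dual_value:
  assumes r: "0 \<le> r" and min: "\<forall>\<rho>\<ge>0. h r \<le> h \<rho>"
  shows "(SUP Q\<in>ambiguity p n U N uh eps. ereal (\<integral>u. g u \<partial>Q)) = ereal (h r)"
proof (rule antisym)
  show "(SUP Q\<in>ambiguity p n U N uh eps. ereal (\<integral>u. g u \<partial>Q)) \<le> ereal (h r)"
    by (rule SUP_least) (use weak r in auto)
next
  show "ereal (h r) \<le> (SUP Q\<in>ambiguity p n U N uh eps. ereal (\<integral>u. g u \<partial>Q))"
  proof (rule ereal_le_epsilon2)
    fix e :: real assume e: "0 < e"
    define \<delta> where "\<delta> = (if 0 < r then min (e / (2 * E)) r else e / (2 * E))"
    have \<delta>0: "0 < \<delta>" using e E_pos r unfolding \<delta>_def by auto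
    have \<delta>r: "0 < r \<Longrightarrow> \<delta> \<le> r" unfolding \<delta>_def by auto
    have \<delta>e: "2 * \<delta> * E \<le> e"
    proof -
      have "\<delta> \<le> e / (2 * E)" unfolding \<delta>_def by auto
      then show ?thesis using E_pos by (simp add: field_simps)
    qed
    obtain Q where Q: "Q \<in> ambiguity p n U N uh eps" and v: "h r - 2 * \<delta> * E \<le> (\<integral>u. g u \<partial>Q)"
      using near_opt[OF r min \<delta>0 \<delta>r] by blast
    have "ereal (h r - e) \<le> ereal (\<integral>u. g u \<partial>Q)" using v \<delta>e by simp
    also have "\<dots> \<le> (SUP Q\<in>ambiguity p n U N uh eps. ereal (\<integral>u. g u \<partial>Q))"
      by (rule SUP_upper[OF Q])
    finally have "ereal (h r - e) \<le> (SUP Q\<in>ambiguity p n U N uh eps. ereal (\<integral>u. g u \<partial>Q))" .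
    then have "ereal (h r - e) + ereal e \<le> (SUP Q\<in>ambiguity p n U N uh eps. ereal (\<integral>u. g u \<partial>Q)) + ereal e"
      by (rule add_right_mono)
    then show "ereal (h r) \<le> (SUP Q\<in>ambiguity p n U N uh eps. ereal (\<integral>u. g u \<partial>Q)) + ereal e"
      by simp
  qed
qed

end



context hyps
begin

definition feasP where
  "feasP p T U N uh \<rho> \<beta> s \<longleftrightarrow> s \<in> sched n T \<and> 0 \<le> \<rho> \<and>
     (\<forall>j\<in>{1..N}. \<forall>u\<in>U. fcost n c d C s u - \<rho> * pnorm_pow p n u (uh j) \<le> \<beta> j)"

definition objP where
  "objP p N eps \<rho> (\<beta> :: nat \<Rightarrow> real) = eps powr p * \<rho> + (1 / real N) * (\<Sum>j=1..N. \<beta> j)"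

lemma generic:
  assumes D: "\<And>s. dro n p (fcost n c d C s) U N uh eps"
  shows "wdras_val p n T c d C U N uh eps = Inf {ereal (objP p N eps \<rho> \<beta>) | \<rho> \<beta> s. feasP p T U N uh \<rho> \<beta> s}
    \<and> wdras_opt p n T c d C U N uh eps = {s. \<exists>\<rho> \<beta>. feasP p T U N uh \<rho> \<beta> s \<and>
         ereal (objP p N eps \<rho> \<beta>) = Inf {ereal (objP p N eps \<rho> \<beta>) | \<rho> \<beta> s. feasP p T U N uh \<rho> \<beta> s}}"
proof -
  let ?obj = "wdras_obj p n c d C U N uh eps"
  let ?V = "Inf {ereal (objP p N eps \<rho> \<beta>) | \<rho> \<beta> s. feasP p T U N uh \<rho> \<beta> s}"
  have objeq: "?obj s = (SUP Q\<in>ambiguity p n U N uh eps. ereal (\<integral>u. fcost n c d C s u \<partial>Q))" for s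
    unfolding wdras_obj_def recourse_eq ..
  have F1: "\<exists>r\<ge>0. ?obj s = ereal (dro.h n p (fcost n c d C s) U N uh eps r) \<and>
      (\<forall>\<rho>\<ge>0. dro.h n p (fcost n c d C s) U N uh eps r \<le> dro.h n p (fcost n c d C s) U N uh eps \<rho>)" for s
  proof -
    interpret D: dro n p "fcost n c d C s" U N uh eps by (rule D)
    obtain r where r: "0 \<le> r" "\<forall>\<rho>\<ge>0. D.h r \<le> D.h \<rho>" using D.h_min by blast
    show ?thesis using D.dual_value[OF r] r objeq[of s] by auto
  qed
  have F2: "?obj s \<le> ereal (objP p N eps \<rho> \<beta>)" if f: "feasP p T U N uh \<rho> \<beta> s" for \<rho> \<beta> s
  proof -
    interpret D: dro n p "fcost n c d C s" U N uh eps by (rule D)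
    obtain r where r: "0 \<le> r" "?obj s = ereal (D.h r)" "\<forall>\<rho>\<ge>0. D.h r \<le> D.h \<rho>" using F1[of s] by blast
    have \<rho>: "0 \<le> \<rho>" using f unfolding feasP_def by auto
    have "D.h \<rho> \<le> objP p N eps \<rho> \<beta>"
    proof -
      have "(\<Sum>j=1..N. D.phi j \<rho>) \<le> (\<Sum>j=1..N. \<beta> j)"
      proof (rule sum_mono)
        fix j assume j: "j \<in> {1..N}"
        obtain a where a: "a \<in> U" "D.phi j \<rho> = fcost n c d C s a - \<rho> * pnorm_pow p n a (uh j)"
          using D.phi_attain by blast
        then show "D.phi j \<rho> \<le> \<beta> j" using f j unfolding feasP_def by auto
      qed
      then show ?thesis unfolding D.h_def objP_def D.E_def using D.N by (simp add: divide_right_mono)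
    qed
    then show ?thesis using r \<rho> by (metis ereal_less_eq(3) order_trans)
  qed
  have F3: "\<exists>\<rho> \<beta>. feasP p T U N uh \<rho> \<beta> s \<and> ?obj s = ereal (objP p N eps \<rho> \<beta>)" if s: "s \<in> sched n T" for s
  proof -
    interpret D: dro n p "fcost n c d C s" U N uh eps by (rule D)
    obtain r where r: "0 \<le> r" "?obj s = ereal (D.h r)" using F1[of s] by blast
    have "feasP p T U N uh r (\<lambda>j. D.phi j r) s"
      unfolding feasP_def using s r D.phi_ge by auto
    moreover have "D.h r = objP p N eps r (\<lambda>j. D.phi j r)"
      unfolding D.h_def objP_def D.E_def ..
    ultimately show ?thesis using r by metis
  qed
  have val: "wdras_val p n T c d C U N uh eps = ?V"
  proof (rule antisym)
    show "wdras_val p n T c d C U N uh eps \<le> ?V"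
      unfolding wdras_val_def
    proof (rule Inf_greatest)
      fix x assume "x \<in> {ereal (objP p N eps \<rho> \<beta>) | \<rho> \<beta> s. feasP p T U N uh \<rho> \<beta> s}"
      then obtain \<rho> \<beta> s where x: "x = ereal (objP p N eps \<rho> \<beta>)" and f: "feasP p T U N uh \<rho> \<beta> s" by blast
      have "s \<in> sched n T" using f unfolding feasP_def by auto
      then have "(INF s\<in>sched n T. ?obj s) \<le> ?obj s" by (rule INF_lower)
      also have "\<dots> \<le> x" using F2[OF f] x by simp
      finally show "(INF s\<in>sched n T. ?obj s) \<le> x" .
    qed
  next
    show "?V \<le> wdras_val p n T c d C U N uh eps"
      unfolding wdras_val_def
    proof (rule INF_greatest)
      fix s assume s: "s \<in> sched n T"
      obtain \<rho> \<beta> where f: "feasP p T U N uh \<rho> \<beta> s" and e: "?obj s = ereal (objP p N eps \<rho> \<beta>)"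
        using F3[OF s] by blast
      show "?V \<le> ?obj s" unfolding e by (rule Inf_lower) (use f in blast)
    qed
  qed
  have opt: "wdras_opt p n T c d C U N uh eps = {s. \<exists>\<rho> \<beta>. feasP p T U N uh \<rho> \<beta> s \<and> ereal (objP p N eps \<rho> \<beta>) = ?V}"
  proof (intro set_eqI iffI)
    fix s assume "s \<in> wdras_opt p n T c d C U N uh eps"
    then have s: "s \<in> sched n T" and e: "?obj s = ?V" unfolding wdras_opt_def val by auto
    obtain \<rho> \<beta> where f: "feasP p T U N uh \<rho> \<beta> s" and e2: "?obj s = ereal (objP p N eps \<rho> \<beta>)"
      using F3[OF s] by blast
    show "s \<in> {s. \<exists>\<rho> \<beta>. feasP p T U N uh \<rho> \<beta> s \<and> ereal (objP p N eps \<rho> \<beta>) = ?V}"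
      using f e e2 by auto
  next
    fix s assume "s \<in> {s. \<exists>\<rho> \<beta>. feasP p T U N uh \<rho> \<beta> s \<and> ereal (objP p N eps \<rho> \<beta>) = ?V}"
    then obtain \<rho> \<beta> where f: "feasP p T U N uh \<rho> \<beta> s" and e: "ereal (objP p N eps \<rho> \<beta>) = ?V" by blast
    have s: "s \<in> sched n T" using f unfolding feasP_def by auto
    have "?obj s \<le> ?V" using F2[OF f] e by simp
    moreover have "?V \<le> ?obj s" using val s unfolding wdras_val_def by (metis INF_lower)
    ultimately have "?obj s = ?V" by (rule antisym)
    then show "s \<in> wdras_opt p n T c d C U N uh eps" unfolding wdras_opt_def val using s by auto
  qed
  show ?thesis using val opt by blast
qed

end



lemma mfst_i[measurable]: "(\<lambda>z::(nat \<Rightarrow> real) \<times> (nat \<Rightarrow> real). fst z i) \<in> borel_measurable (borel \<Otimes>\<^sub>M borel)"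
  by (rule measurable_compose[OF measurable_fst measurable_product_coordinates])

lemma msnd_i[measurable]: "(\<lambda>z::(nat \<Rightarrow> real) \<times> (nat \<Rightarrow> real). snd z i) \<in> borel_measurable (borel \<Otimes>\<^sub>M borel)"
  by (rule measurable_compose[OF measurable_snd measurable_product_coordinates])

lemma dro_p1:
  assumes "compact U" "U \<noteq> {}" "\<forall>j\<in>{1..N}. uh j \<in> U" "1 \<le> N" "0 < eps"
  shows "dro n 1 (fcost n c d C s) U N uh eps"
proof (unfold_locales)
  show "continuous_on UNIV (fcost n c d C s)" using cont_fcost[of UNIV n c d C s] by simp
  show "continuous_on UNIV (\<lambda>u. pnorm_pow 1 n u v)" for v
    unfolding pnorm1 by (intro continuous_intros)
  show "(\<lambda>z. pnorm_pow 1 n (fst z) (snd z)) \<in> borel_measurable (borel \<Otimes>\<^sub>M borel)"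
    unfolding pnorm1 by measurable
  show "pnorm_pow 1 n v v = 0" for v unfolding pnorm1 by simp
qed (use assms in auto)

lemma dro_p2:
  assumes "compact U" "U \<noteq> {}" "\<forall>j\<in>{1..N}. uh j \<in> U" "1 \<le> N" "0 < eps"
  shows "dro n 2 (fcost n c d C s) U N uh eps"
proof (unfold_locales)
  show "continuous_on UNIV (fcost n c d C s)" using cont_fcost[of UNIV n c d C s] by simp
  show "continuous_on UNIV (\<lambda>u. pnorm_pow 2 n u v)" for v
    unfolding pnorm2 by (intro continuous_intros)
  show "(\<lambda>z. pnorm_pow 2 n (fst z) (snd z)) \<in> borel_measurable (borel \<Otimes>\<^sub>M borel)"
    unfolding pnorm2 by measurable
  show "pnorm_pow 2 n v v = 0" for v unfolding pnorm2 by simp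
qed (use assms in auto)

theorem theorem3:
  fixes n N :: nat and T C eps :: real and c d :: "nat \<Rightarrow> real"
    and U :: "(nat \<Rightarrow> real) set" and uh :: "nat \<Rightarrow> nat \<Rightarrow> real"
  assumes "1 \<le> n" and "1 \<le> N" and "0 < T"
    and "\<forall>i\<in>{1..n}. 0 \<le> c i" and "\<forall>i\<in>{1..n}. 0 \<le> d i" and "0 \<le> C"
    and "\<forall>i\<in>{1..n-1}. d (i+1) - d i \<le> c (i+1)"
    and "U \<subseteq> vecs n" and "U \<noteq> {}" and "compact U" and "convex_vecs n U"
    and "\<forall>j\<in>{1..N}. uh j \<in> U"
    and "0 < eps"
  shows "(wdras_val 1 n T c d C U N uh eps = prog1_val n T c d C U N uh eps \<and>
          wdras_opt 1 n T c d C U N uh eps = prog1_opt n T c d C U N uh eps) \<and>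
         (wdras_val 2 n T c d C U N uh eps = prog2_val n T c d C U N uh eps \<and>
          wdras_opt 2 n T c d C U N uh eps = prog2_opt n T c d C U N uh eps)"
proof -
  note A = assms
  interpret H: hyps n c d C using A by unfold_locales auto
  have uhv: "j \<in> {1..N} \<Longrightarrow> uh j \<in> vecs n" for j using A(8,12) by auto
  have f1: "prog1_feas n T c d C U N uh \<rho> \<beta> s \<longleftrightarrow> H.feasP 1 T U N uh \<rho> \<beta> s" for \<rho> \<beta> s
  proof (cases "0 \<le> \<rho>")
    case True
    have "(\<forall>j\<in>{1..N}. shiftM (\<beta> j) (H1 n (uh j) \<rho> s) \<in> COP (3*n+1) (K1 n c d C U (uh j))) \<longleftrightarrow>
          (\<forall>j\<in>{1..N}. \<forall>u\<in>U. fcost n c d C s u - \<rho> * pnorm_pow 1 n u (uh j) \<le> \<beta> j)"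
    proof (intro ball_cong refl)
      fix j assume j: "j \<in> {1..N}"
      show "shiftM (\<beta> j) (H1 n (uh j) \<rho> s) \<in> COP (3*n+1) (K1 n c d C U (uh j)) \<longleftrightarrow>
          (\<forall>u\<in>U. fcost n c d C s u - \<rho> * pnorm_pow 1 n u (uh j) \<le> \<beta> j)"
        unfolding COP1_iff H.feas1_iff[OF True uhv[OF j] A(8)] ..
    qed
    then show ?thesis unfolding prog1_feas_def H.feasP_def by blast
  next
    case False
    then show ?thesis unfolding prog1_feas_def H.feasP_def by blast
  qed
  have o1: "prog1_obj N eps \<rho> \<beta> = H.objP 1 N eps \<rho> \<beta>" for \<rho> \<beta>
    unfolding prog1_obj_def H.objP_def using A(13) by simp
  have f2: "prog2_feas n T c d C U N uh \<rho> \<beta> s \<longleftrightarrow> H.feasP 2 T U N uh \<rho> \<beta> s" for \<rho> \<beta> s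
    unfolding prog2_feas_def H.feasP_def COP2_iff[OF A(8)] H.feas2_iff by blast
  have o2: "prog2_obj N eps \<rho> \<beta> = H.objP 2 N eps \<rho> \<beta>" for \<rho> \<beta>
    unfolding prog2_obj_def H.objP_def using A(13) by simp
  have v1: "prog1_val n T c d C U N uh eps = Inf {ereal (H.objP 1 N eps \<rho> \<beta>) | \<rho> \<beta> s. H.feasP 1 T U N uh \<rho> \<beta> s}"
    unfolding prog1_val_def f1 o1 ..
  have v2: "prog2_val n T c d C U N uh eps = Inf {ereal (H.objP 2 N eps \<rho> \<beta>) | \<rho> \<beta> s. H.feasP 2 T U N uh \<rho> \<beta> s}"
    unfolding prog2_val_def f2 o2 ..
  note g1 = H.generic[of 1 U N uh eps T, OF dro_p1[OF A(10,9,12,2,13)]]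
  note g2 = H.generic[of 2 U N uh eps T, OF dro_p2[OF A(10,9,12,2,13)]]
  show ?thesis
    using g1 g2 unfolding prog1_opt_def prog2_opt_def v1 v2 f1 f2 o1 o2 by simp
qed


end
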